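(* Let $G$ be a groupoid with finite object set $G_0$, $A$ a unital ring and $\alpha=(A_g,\alpha_g)_{g\in G}$ a unital partial action of $G$ on $A$ with $A=\bigoplus_{e\in G_0}A_e$. Then the ring extension $A\subset A\star_\alpha G$ is separable if and only if, for every $[e]\in G_0/\!\sim$, the extension $A_{[e]}\subset A_{[e]}\star_{\alpha_{[e]}}G_{[e]}$ is separable, where $A_{[e]}=\bigoplus_{f\in[e]}A_f$ and $\alpha_{[e]}=(A_g,\alpha_g)_{g\in G_{[e]}}$.
   Context: A groupoid $G$ is a small category in which every morphism is invertible; $G_0$ is its object set (objects identified with identity morphisms), $s,t$ source and target; $gh$ is defined iff $s(g)=t(h)$; $G(e,f)$ is the set of morphisms from $e$ to $f$; $e\sim f$ iff $G(e,f)\neq\emptyset$; $G_{[e]}$ is the full subgroupoid on the class $[e]$. A unital partial action of $G$ on $A$ is a family $\alpha=(A_g,\alpha_g)_{g\in G}$ where $A_{t(g)}$ is a two-sided ideal of $A$, $A_g=A1_g$ is a two-sided ideal of $A_{t(g)}$ with $1_g$ a central idempotent of $A$, $\alpha_g:A_{g^{-1}}\to A_g$ a ring isomorphism, such that $\alpha_e=\mathrm{id}_{A_e}$ for $e\in G_0$, $\alpha_h^{-1}(A_{g^{-1}}\cap A_h)\subseteq A_{(gh)^{-1}}$ and $\alpha_g(\alpha_h(x))=\alpha_{gh}(x)$ for $x\in\alpha_h^{-1}(A_{g^{-1}}\cap A_h)$, whenever $s(g)=t(h)$. The partial skew groupoid ring $A\star_\alpha G=\bigoplus_{g\in G}A_g\delta_g$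 has multiplication $(a_g\delta_g)(b_h\delta_h)=\alpha_g(\alpha_{g^{-1}}(a_g)b_h)\delta_{gh}$ if $s(g)=t(h)$ and $0$ otherwise; it is unital with $1=\sum_{e\in G_0}1_e\delta_e$, and $A$ is regarded as a subring via $a\mapsto\sum_{e\in G_0}(a1_e)\delta_e$. A ring extension $R\subseteq S$ (unital, same identity) is separable if the multiplication map $S\otimes_R S\to S$ splits as a map of $(S,S)$-bimodules; equivalently there exists $x\in S\otimes_R S$ with $m(x)=1_S$ and $sx=xs$ for all $s\in S$. *)

theory Defs
  imports "HOL-Algebra.Ideal"
begin

section \<open>Groupoids (objects identified with identity morphisms)\<close>

record 'g gpd =
  gmor :: "'g set"
  gobj :: "'g set"
  gsrc :: "'g \<Rightarrow> 'g"
  gtgt :: "'g \<Rightarrow> 'g"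
  gcmp :: "'g \<Rightarrow> 'g \<Rightarrow> 'g"
  ginv :: "'g \<Rightarrow> 'g"

definition groupoid :: "'g gpd \<Rightarrow> bool" where
  "groupoid G \<longleftrightarrow>
     gobj G \<subseteq> gmor G \<and>
     (\<forall>g\<in>gmor G. gsrc G g \<in> gobj G \<and> gtgt G g \<in> gobj G) \<and>
     (\<forall>e\<in>gobj G. gsrc G e = e \<and> gtgt G e = e) \<and>
     (\<forall>g\<in>gmor G. \<forall>h\<in>gmor G. gsrc G g = gtgt G h \<longrightarrow>
        gcmp G g h \<in> gmor G \<and> gsrc G (gcmp G g h) = gsrc G h \<and> gtgt G (gcmp G g h) = gtgt G g) \<and>
     (\<forall>f\<in>gmor G. \<forall>g\<in>gmor G. \<forall>h\<in>gmor G. gsrc G f = gtgt G g \<longrightarrow> gsrc G g = gtgt G h \<longrightarrow>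
        gcmp G (gcmp G f g) h = gcmp G f (gcmp G g h)) \<and>
     (\<forall>g\<in>gmor G. gcmp G g (gsrc G g) = g \<and> gcmp G (gtgt G g) g = g) \<and>
     (\<forall>g\<in>gmor G. ginv G g \<in> gmor G \<and> gsrc G (ginv G g) = gtgt G g \<and> gtgt G (ginv G g) = gsrc G g \<and>
        gcmp G g (ginv G g) = gtgt G g \<and> gcmp G (ginv G g) g = gsrc G g)"

definition obj_class :: "'g gpd \<Rightarrow> 'g \<Rightarrow> 'g set" where
  "obj_class G e = {f \<in> gobj G. \<exists>g\<in>gmor G. gsrc G g = e \<and> gtgt G g = f}"

definition sub_gpd :: "'g gpd \<Rightarrow> 'g \<Rightarrow> 'g gpd" where
  "sub_gpd G e = G\<lparr> gmor := {g \<in> gmor G. gsrc G g \<in> obj_class G e \<and> gtgt G g \<in> obj_class G e},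
                    gobj := obj_class G e \<rparr>"

text \<open>D g is the ideal A_g, u g the central idempotent 1_g, act g the isomorphism alpha_g.\<close>
definition unital_partial_action ::
  "'g gpd \<Rightarrow> ('a, 'm) ring_scheme \<Rightarrow> ('g \<Rightarrow> 'a set) \<Rightarrow> ('g \<Rightarrow> 'a) \<Rightarrow> ('g \<Rightarrow> 'a \<Rightarrow> 'a) \<Rightarrow> bool" where
  "unital_partial_action G A D u act \<longleftrightarrow>
     (\<forall>g\<in>gmor G. ideal (D (gtgt G g)) A) \<and>
     (\<forall>g\<in>gmor G. u g \<in> carrier A \<and> u g \<otimes>\<^bsub>A\<^esub> u g = u g \<and>
                   (\<forall>a\<in>carrier A. a \<otimes>\<^bsub>A\<^esub> u g = u g \<otimes>\<^bsub>A\<^esub> a)) \<and>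
     (\<forall>g\<in>gmor G. D g = {a \<otimes>\<^bsub>A\<^esub> u g | a. a \<in> carrier A}) \<and>
     (\<forall>g\<in>gmor G. D g \<subseteq> D (gtgt G g) \<and> additive_subgroup (D g) A \<and>
        (\<forall>x\<in>D (gtgt G g). \<forall>y\<in>D g. x \<otimes>\<^bsub>A\<^esub> y \<in> D g \<and> y \<otimes>\<^bsub>A\<^esub> x \<in> D g)) \<and>
     (\<forall>g\<in>gmor G. bij_betw (act g) (D (ginv G g)) (D g) \<and>
        (\<forall>x\<in>D (ginv G g). \<forall>y\<in>D (ginv G g).
            act g (x \<oplus>\<^bsub>A\<^esub> y) = act g x \<oplus>\<^bsub>A\<^esub> act g y \<and>
            act g (x \<otimes>\<^bsub>A\<^esub> y) = act g x \<otimes>\<^bsub>A\<^esub> act g y)) \<and>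
     (\<forall>e\<in>gobj G. \<forall>x\<in>D e. act e x = x) \<and>
     (\<forall>g\<in>gmor G. \<forall>h\<in>gmor G. gsrc G g = gtgt G h \<longrightarrow>
        (\<forall>x\<in>D (ginv G h). act h x \<in> D (ginv G g) \<longrightarrow>
            x \<in> D (ginv G (gcmp G g h)) \<and> act g (act h x) = act (gcmp G g h) x))"

definition direct_sum_objs :: "'g gpd \<Rightarrow> ('a, 'm) ring_scheme \<Rightarrow> ('g \<Rightarrow> 'a set) \<Rightarrow> bool" where
  "direct_sum_objs G A D \<longleftrightarrow>
     (\<forall>a\<in>carrier A. \<exists>!c. (\<forall>e\<in>gobj G. c e \<in> D e) \<and> (\<forall>e. e \<notin> gobj G \<longrightarrow> c e = \<zero>\<^bsub>A\<^esub>) \<and>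
                        a = finsum A c (gobj G))"

definition class_ring :: "'g gpd \<Rightarrow> ('a, 'm) ring_scheme \<Rightarrow> ('g \<Rightarrow> 'a set) \<Rightarrow> ('g \<Rightarrow> 'a) \<Rightarrow> 'g
    \<Rightarrow> ('a, 'm) ring_scheme" where
  "class_ring G A D u e = A\<lparr> carrier := {finsum A c (obj_class G e) | c. \<forall>f\<in>obj_class G e. c f \<in> D f},
                             one := finsum A u (obj_class G e) \<rparr>"

text \<open>Elements sum a_g delta_g are represented as finitely supported functions g to a_g in A_g.\<close>
definition skew_ring :: "'g gpd \<Rightarrow> ('a, 'm) ring_scheme \<Rightarrow> ('g \<Rightarrow> 'a set) \<Rightarrow> ('g \<Rightarrow> 'a)
    \<Rightarrow> ('g \<Rightarrow> 'a \<Rightarrow> 'a) \<Rightarrow> ('g \<Rightarrow> 'a) ring" where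
  "skew_ring G A D u act =
     \<lparr> carrier = {x. (\<forall>g. g \<notin> gmor G \<longrightarrow> x g = \<zero>\<^bsub>A\<^esub>) \<and> finite {g \<in> gmor G. x g \<noteq> \<zero>\<^bsub>A\<^esub>} \<and>
                     (\<forall>g\<in>gmor G. x g \<in> D g)},
       mult = (\<lambda>x y k. if k \<in> gmor G then
                 finsum A (\<lambda>g. act g (act (ginv G g) (x g) \<otimes>\<^bsub>A\<^esub> y (gcmp G (ginv G g) k)))
                        {g \<in> gmor G. x g \<noteq> \<zero>\<^bsub>A\<^esub> \<and> gtgt G g = gtgt G k}
               else \<zero>\<^bsub>A\<^esub>),
       one = (\<lambda>g. if g \<in> gobj G then u g else \<zero>\<^bsub>A\<^esub>),
       zero = (\<lambda>g. \<zero>\<^bsub>A\<^esub>),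
       add = (\<lambda>x y g. x g \<oplus>\<^bsub>A\<^esub> y g) \<rparr>"

definition skew_emb :: "'g gpd \<Rightarrow> ('a, 'm) ring_scheme \<Rightarrow> ('g \<Rightarrow> 'a) \<Rightarrow> 'a \<Rightarrow> 'g \<Rightarrow> 'a" where
  "skew_emb G A u a = (\<lambda>g. if g \<in> gobj G then a \<otimes>\<^bsub>A\<^esub> u g else \<zero>\<^bsub>A\<^esub>)"

text \<open>A formal sum of simple tensors, given as a list of pairs, is encoded by its integer
  coefficient function. Two formal sums denote the same element of S (x)_R S iff the difference
  of their coefficient functions lies in the subgroup generated by the balanced-bilinearity relations.\<close>

definition pt :: "'b \<times> 'b \<Rightarrow> 'b \<times> 'b \<Rightarrow> int" where
  "pt p = (\<lambda>q. if q = p then 1 else 0)"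

inductive_set tensor_rel :: "('r, 'n) ring_scheme \<Rightarrow> ('b, 'k) ring_scheme \<Rightarrow> ('r \<Rightarrow> 'b)
    \<Rightarrow> ('b \<times> 'b \<Rightarrow> int) set"
  for R S phi where
  tr_zero: "(\<lambda>_. 0) \<in> tensor_rel R S phi"
| tr_add: "x \<in> tensor_rel R S phi \<Longrightarrow> y \<in> tensor_rel R S phi \<Longrightarrow> (\<lambda>p. x p + y p) \<in> tensor_rel R S phi"
| tr_neg: "x \<in> tensor_rel R S phi \<Longrightarrow> (\<lambda>p. - x p) \<in> tensor_rel R S phi"
| tr_left: "a \<in> carrier S \<Longrightarrow> b \<in> carrier S \<Longrightarrow> c \<in> carrier S \<Longrightarrow>
     (\<lambda>p. pt (a \<oplus>\<^bsub>S\<^esub> b, c) p - pt (a, c) p - pt (b, c) p) \<in> tensor_rel R S phi"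
| tr_right: "a \<in> carrier S \<Longrightarrow> b \<in> carrier S \<Longrightarrow> c \<in> carrier S \<Longrightarrow>
     (\<lambda>p. pt (a, b \<oplus>\<^bsub>S\<^esub> c) p - pt (a, b) p - pt (a, c) p) \<in> tensor_rel R S phi"
| tr_mid: "a \<in> carrier S \<Longrightarrow> b \<in> carrier S \<Longrightarrow> r \<in> carrier R \<Longrightarrow>
     (\<lambda>p. pt (a \<otimes>\<^bsub>S\<^esub> phi r, b) p - pt (a, phi r \<otimes>\<^bsub>S\<^esub> b) p) \<in> tensor_rel R S phi"

definition coeffs :: "('b \<times> 'b) list \<Rightarrow> 'b \<times> 'b \<Rightarrow> int" where
  "coeffs xs = (\<lambda>p. int (count_list xs p))"

definition tensor_eq :: "('r, 'n) ring_scheme \<Rightarrow> ('b, 'k) ring_scheme \<Rightarrow> ('r \<Rightarrow> 'b)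
    \<Rightarrow> ('b \<times> 'b) list \<Rightarrow> ('b \<times> 'b) list \<Rightarrow> bool" where
  "tensor_eq R S phi xs ys \<longleftrightarrow> (\<lambda>p. coeffs xs p - coeffs ys p) \<in> tensor_rel R S phi"

definition separable_ext :: "('r, 'n) ring_scheme \<Rightarrow> ('b, 'k) ring_scheme \<Rightarrow> ('r \<Rightarrow> 'b) \<Rightarrow> bool" where
  "separable_ext R S phi \<longleftrightarrow>
     (\<exists>xs. set xs \<subseteq> carrier S \<times> carrier S \<and>
           finsum S (\<lambda>i. fst (xs ! i) \<otimes>\<^bsub>S\<^esub> snd (xs ! i)) {..<length xs} = \<one>\<^bsub>S\<^esub> \<and>
           (\<forall>s\<in>carrier S. tensor_eq R S phi (map (\<lambda>(a, b). (s \<otimes>\<^bsub>S\<^esub> a, b)) xs)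
                                                (map (\<lambda>(a, b). (a, b \<otimes>\<^bsub>S\<^esub> s)) xs)))"

end

theory Submission
  imports Defs
begin

locale gpdL =
  fixes G :: "'g gpd"
  assumes grp: "groupoid G"
begin

abbreviation "M \<equiv> gmor G"
abbreviation "Ob \<equiv> gobj G"
abbreviation "s \<equiv> gsrc G"
abbreviation "t \<equiv> gtgt G"
abbreviation "cmp \<equiv> gcmp G"
abbreviation "iv \<equiv> ginv G"

lemma obj_mor: "e \<in> Ob \<Longrightarrow> e \<in> M" using grp unfolding groupoid_def by blast
lemma src_obj: "g \<in> M \<Longrightarrow> s g \<in> Ob" using grp unfolding groupoid_def by blast
lemma tgt_obj: "g \<in> M \<Longrightarrow> t g \<in> Ob" using grp unfolding groupoid_def by blast
lemma obj_st: "e \<in> Ob \<Longrightarrow> s e = e" "e \<in> Ob \<Longrightarrow> t e = e" using grp unfolding groupoid_def by blast+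
lemma cmp_mor: "g \<in> M \<Longrightarrow> h \<in> M \<Longrightarrow> s g = t h \<Longrightarrow> cmp g h \<in> M"
  using grp unfolding groupoid_def by blast
lemma cmp_st: "g \<in> M \<Longrightarrow> h \<in> M \<Longrightarrow> s g = t h \<Longrightarrow> s (cmp g h) = s h"
  "g \<in> M \<Longrightarrow> h \<in> M \<Longrightarrow> s g = t h \<Longrightarrow> t (cmp g h) = t g"
  using grp unfolding groupoid_def by blast+
lemma assoc: "f \<in> M \<Longrightarrow> g \<in> M \<Longrightarrow> h \<in> M \<Longrightarrow> s f = t g \<Longrightarrow> s g = t h \<Longrightarrow>
  cmp (cmp f g) h = cmp f (cmp g h)"
  using grp unfolding groupoid_def by blast
lemma unit: "g \<in> M \<Longrightarrow> cmp g (s g) = g" "g \<in> M \<Longrightarrow> cmp (t g) g = g"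
  using grp unfolding groupoid_def by blast+
lemma inv_mor: "g \<in> M \<Longrightarrow> iv g \<in> M" and inv_st: "g \<in> M \<Longrightarrow> s (iv g) = t g" "g \<in> M \<Longrightarrow> t (iv g) = s g"
  and inv_cmp: "g \<in> M \<Longrightarrow> cmp g (iv g) = t g" "g \<in> M \<Longrightarrow> cmp (iv g) g = s g"
  using grp unfolding groupoid_def by blast+

lemma inv_inv: assumes g: "g \<in> M" shows "iv (iv g) = g"
proof -
  let ?i = "iv g" let ?j = "iv ?i"
  have i: "?i \<in> M" and j: "?j \<in> M" using g inv_mor by auto
  have "?j = cmp ?j (s ?j)" using unit j by simp
  also have "s ?j = s g" using inv_st i g by simp
  also have "s g = cmp ?i g" using inv_cmp g by simp
  also have "cmp ?j (cmp ?i g) = cmp (cmp ?j ?i) g"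
    using assoc[OF j i g] inv_st i g by simp
  also have "cmp ?j ?i = t g" using inv_cmp(2)[OF i] inv_st g by simp
  also have "cmp (t g) g = g" using unit g by simp
  finally show ?thesis .
qed

lemma ginvk: assumes g: "g \<in> M" and k: "k \<in> M" and tt: "t g = t k"
  shows "cmp (iv g) k \<in> M" "s (cmp (iv g) k) = s k" "t (cmp (iv g) k) = s g"
    "cmp g (cmp (iv g) k) = k"
proof -
  have i: "iv g \<in> M" "s (iv g) = t k" "t (iv g) = s g" using g inv_mor inv_st tt by auto
  show "cmp (iv g) k \<in> M" using cmp_mor i k by simp
  show "s (cmp (iv g) k) = s k" using cmp_st i k by simp
  show "t (cmp (iv g) k) = s g" using cmp_st i k by simp
  have "cmp g (cmp (iv g) k) = cmp (cmp g (iv g)) k"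
    using assoc[OF g i(1) k] inv_st g i by simp
  also have "\<dots> = k" using inv_cmp g tt unit k by simp
  finally show "cmp g (cmp (iv g) k) = k" .
qed

abbreviation "C \<equiv> obj_class G"

lemma C_sub: "C e \<subseteq> Ob" unfolding obj_class_def by auto

lemma C_self: "e \<in> Ob \<Longrightarrow> e \<in> C e"
  unfolding obj_class_def using obj_mor obj_st by auto

lemma C_src: assumes "f \<in> C e" "g \<in> M" "t g = f" shows "s g \<in> C e"
proof -
  from assms(1) obtain h where h: "h \<in> M" "s h = e" "t h = f" unfolding obj_class_def by auto
  have "cmp (iv g) h \<in> M" "s (cmp (iv g) h) = e" "t (cmp (iv g) h) = s g"
    using ginvk[OF assms(2) h(1)] assms h by auto
  then show ?thesis unfolding obj_class_def using src_obj assms(2) by blast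
qed

lemma C_tgt: assumes "f \<in> C e" "g \<in> M" "s g = f" shows "t g \<in> C e"
proof -
  from assms(1) obtain h where h: "h \<in> M" "s h = e" "t h = f" unfolding obj_class_def by auto
  have "cmp g h \<in> M" "s (cmp g h) = e" "t (cmp g h) = t g"
    using cmp_mor cmp_st assms h by auto
  then show ?thesis unfolding obj_class_def using tgt_obj assms(2) by blast
qed

lemma C_eq: assumes "f \<in> C e" shows "C f = C e"
proof -
  from assms obtain h where h: "h \<in> M" "s h = e" "t h = f" "f \<in> Ob" unfolding obj_class_def by auto
  have e: "e \<in> Ob" using h src_obj by auto
  show ?thesis
  proof
    show "C f \<subseteq> C e"
    proof
      fix x assume "x \<in> C f"
      then obtain k where k: "k \<in> M" "s k = f" "t k = x" "x \<in> Ob" unfolding obj_class_def by auto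
      then show "x \<in> C e" using C_tgt[OF assms k(1)] by auto
    qed
    show "C e \<subseteq> C f"
    proof
      fix x assume "x \<in> C e"
      then obtain k where k: "k \<in> M" "s k = e" "t k = x" "x \<in> Ob" unfolding obj_class_def by auto
      have "e \<in> C f" using C_src[OF C_self[OF h(4)] h(1)] h by simp
      then show "x \<in> C f" using C_tgt[OF _ k(1)] k by auto
    qed
  qed
qed

end


locale PA = gpdL G for G :: "'g gpd" +
  fixes A :: "('a, 'm) ring_scheme" and D :: "'g \<Rightarrow> 'a set" and u :: "'g \<Rightarrow> 'a"
    and act :: "'g \<Rightarrow> 'a \<Rightarrow> 'a"
  assumes fin: "finite (gobj G)" and rA: "ring A"
    and upa: "unital_partial_action G A D u act" and ds: "direct_sum_objs G A D"
begin

sublocale R: ring A by (rule rA)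

lemmas U = upa[unfolded unital_partial_action_def]
lemmas U2 = U[THEN conjunct2, THEN conjunct1]
lemmas U3 = U[THEN conjunct2, THEN conjunct2, THEN conjunct1]
lemmas U4 = U[THEN conjunct2, THEN conjunct2, THEN conjunct2, THEN conjunct1]
lemmas U5 = U[THEN conjunct2, THEN conjunct2, THEN conjunct2, THEN conjunct2, THEN conjunct1]
lemmas U6 = U[THEN conjunct2, THEN conjunct2, THEN conjunct2, THEN conjunct2, THEN conjunct2, THEN conjunct1]
lemmas U7 = U[THEN conjunct2, THEN conjunct2, THEN conjunct2, THEN conjunct2, THEN conjunct2, THEN conjunct2]

lemma u_c: "g \<in> M \<Longrightarrow> u g \<in> carrier A" and u_idem: "g \<in> M \<Longrightarrow> u g \<otimes>\<^bsub>A\<^esub> u g = u g"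
  and u_central: "g \<in> M \<Longrightarrow> a \<in> carrier A \<Longrightarrow> a \<otimes>\<^bsub>A\<^esub> u g = u g \<otimes>\<^bsub>A\<^esub> a"
  using U2 by blast+

lemma D_def': "g \<in> M \<Longrightarrow> D g = {a \<otimes>\<^bsub>A\<^esub> u g | a. a \<in> carrier A}"
  using U3 by blast

lemma memD: assumes g: "g \<in> M" shows "x \<in> D g \<longleftrightarrow> x \<in> carrier A \<and> x \<otimes>\<^bsub>A\<^esub> u g = x"
proof
  assume "x \<in> D g"
  then obtain a where a: "a \<in> carrier A" "x = a \<otimes>\<^bsub>A\<^esub> u g" using D_def'[OF g] by auto
  then show "x \<in> carrier A \<and> x \<otimes>\<^bsub>A\<^esub> u g = x"
    using u_c[OF g] u_idem[OF g] by (simp add: R.m_assoc)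
next
  assume "x \<in> carrier A \<and> x \<otimes>\<^bsub>A\<^esub> u g = x"
  then have "\<exists>a. x = a \<otimes>\<^bsub>A\<^esub> u g \<and> a \<in> carrier A" by metis
  then show "x \<in> D g" using D_def'[OF g] by simp
qed

lemma D_c: "g \<in> M \<Longrightarrow> x \<in> D g \<Longrightarrow> x \<in> carrier A" using memD by blast

lemma zero_D: "g \<in> M \<Longrightarrow> \<zero>\<^bsub>A\<^esub> \<in> D g" using memD u_c by simp

lemma D_tgt: "g \<in> M \<Longrightarrow> D g \<subseteq> D (t g)"
  using U4 by blast

lemma D_add: "g \<in> M \<Longrightarrow> x \<in> D g \<Longrightarrow> y \<in> D g \<Longrightarrow> x \<oplus>\<^bsub>A\<^esub> y \<in> D g"
proof -
  assume g: "g \<in> M" and xy: "x \<in> D g" "y \<in> D g"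
  have "subgroup (D g) (add_monoid A)"
    using U4 g unfolding additive_subgroup_def by blast
  from subgroup.m_closed[OF this xy] show ?thesis by simp
qed

lemma act_bij: "g \<in> M \<Longrightarrow> bij_betw (act g) (D (iv g)) (D g)"
  using U5 by blast

lemma act_in: "g \<in> M \<Longrightarrow> x \<in> D (iv g) \<Longrightarrow> act g x \<in> D g"
  using act_bij bij_betwE by blast

lemma act_add: "g \<in> M \<Longrightarrow> x \<in> D (iv g) \<Longrightarrow> y \<in> D (iv g) \<Longrightarrow>
   act g (x \<oplus>\<^bsub>A\<^esub> y) = act g x \<oplus>\<^bsub>A\<^esub> act g y"
  using U5 by blast

lemma act_obj: "e \<in> Ob \<Longrightarrow> x \<in> D e \<Longrightarrow> act e x = x"
  using U6 by blast

lemma act_comp: "g \<in> M \<Longrightarrow> h \<in> M \<Longrightarrow> s g = t h \<Longrightarrow> x \<in> D (iv h) \<Longrightarrow> act h x \<in> D (iv g) \<Longrightarrow>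
   x \<in> D (iv (cmp g h)) \<and> act g (act h x) = act (cmp g h) x"
  using U7 by blast

lemma act_zero: assumes g: "g \<in> M" shows "act g \<zero>\<^bsub>A\<^esub> = \<zero>\<^bsub>A\<^esub>"
proof -
  have z: "\<zero>\<^bsub>A\<^esub> \<in> D (iv g)" using zero_D inv_mor g by blast
  have c: "act g \<zero>\<^bsub>A\<^esub> \<in> carrier A" using act_in[OF g z] D_c g by blast
  have "act g \<zero>\<^bsub>A\<^esub> = act g \<zero>\<^bsub>A\<^esub> \<oplus>\<^bsub>A\<^esub> act g \<zero>\<^bsub>A\<^esub>"
    using act_add[OF g z z] by simp
  then show ?thesis using R.add.l_cancel_one'[OF c c] by simp
qed

lemma term_in:
  assumes g: "g \<in> M" and k: "k \<in> M" and tt: "t g = t k" and x: "x \<in> D g"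
    and y: "y \<in> D (cmp (iv g) k)"
  shows "act g (act (iv g) x \<otimes>\<^bsub>A\<^esub> y) \<in> D k"
proof -
  define h where "h = cmp (iv g) k"
  have h: "h \<in> M" "s h = s k" "t h = s g" "cmp g h = k" using ginvk[OF g k tt] h_def by auto
  have ig: "iv g \<in> M" using inv_mor g by simp
  have x': "act (iv g) x \<in> D (iv g)" using act_in[OF ig] x inv_inv g by simp
  define z where "z = act (iv g) x \<otimes>\<^bsub>A\<^esub> y"
  have yh: "y \<in> D h" using y h_def by simp
  have xc: "act (iv g) x \<in> carrier A" and yc: "y \<in> carrier A" using x' yh D_c ig h by auto
  have zc: "z \<in> carrier A" using xc yc z_def by simp
  have zh: "z \<in> D h"
    using memD[OF h(1)] yh zc z_def xc yc u_c[OF h(1)] by (simp add: R.m_assoc)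
  have zg: "z \<in> D (iv g)"
  proof -
    have "z \<otimes>\<^bsub>A\<^esub> u (iv g) = act (iv g) x \<otimes>\<^bsub>A\<^esub> (u (iv g) \<otimes>\<^bsub>A\<^esub> y)"
      using z_def xc yc u_c[OF ig] u_central[OF ig yc] by (simp add: R.m_assoc)
    also have "\<dots> = (act (iv g) x \<otimes>\<^bsub>A\<^esub> u (iv g)) \<otimes>\<^bsub>A\<^esub> y"
      using xc yc u_c[OF ig] by (simp add: R.m_assoc)
    also have "\<dots> = z" using memD[OF ig] x' z_def by simp
    finally show ?thesis using memD[OF ig] zc by simp
  qed
  have ih: "iv h \<in> M" using inv_mor h by simp
  define w where "w = act (iv h) z"
  have zih: "z \<in> D (iv (iv h))" using zh inv_inv h by simp
  have w: "w \<in> D (iv h)" using act_in[OF ih zih] w_def by simp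
  have "act h w = act (cmp h (iv h)) z"
    using act_comp[OF h(1) ih _ zih] inv_st h w w_def by simp
  also have "cmp h (iv h) = t h" using inv_cmp h by simp
  also have "act (t h) z = z" using act_obj tgt_obj h D_tgt zh by blast
  finally have hw: "act h w = z" .
  have "w \<in> D (iv (cmp g h)) \<and> act g (act h w) = act (cmp g h) w"
    by (rule act_comp[OF g h(1)]) (use h w hw zg in auto)
  then have "act g z = act k w" "w \<in> D (iv k)" using hw h by auto
  then show ?thesis using act_in[OF k] z_def by simp
qed

lemma orth: assumes f: "f \<in> Ob" and g: "g \<in> Ob" and ne: "f \<noteq> g"
  shows "u f \<otimes>\<^bsub>A\<^esub> u g = \<zero>\<^bsub>A\<^esub>"
proof -
  have fm: "f \<in> M" and gm: "g \<in> M" using f g obj_mor by auto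
  define x where "x = u f \<otimes>\<^bsub>A\<^esub> u g"
  have xc: "x \<in> carrier A" using x_def u_c fm gm by simp
  have xg: "x \<in> D g" using memD[OF gm] xc x_def u_c fm gm u_idem by (simp add: R.m_assoc)
  have "x \<otimes>\<^bsub>A\<^esub> u f = u f \<otimes>\<^bsub>A\<^esub> (u g \<otimes>\<^bsub>A\<^esub> u f)"
    using x_def u_c fm gm by (simp add: R.m_assoc)
  also have "u g \<otimes>\<^bsub>A\<^esub> u f = u f \<otimes>\<^bsub>A\<^esub> u g" using u_central[OF gm u_c[OF fm]] by simp
  also have "u f \<otimes>\<^bsub>A\<^esub> (u f \<otimes>\<^bsub>A\<^esub> u g) = x"
    using x_def u_c fm gm u_idem[OF fm] by (simp add: R.m_assoc[symmetric])
  finally have xf: "x \<in> D f" using memD[OF fm] xc by simp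
  define c1 where "c1 = (\<lambda>e. if e = f then x else \<zero>\<^bsub>A\<^esub>)"
  define c2 where "c2 = (\<lambda>e. if e = g then x else \<zero>\<^bsub>A\<^esub>)"
  have s1: "finsum A c1 Ob = x"
    using R.finsum_singleton[OF f fin, of "\<lambda>_. x"] xc unfolding c1_def
    by (simp add: eq_commute)
  have s2: "finsum A c2 Ob = x"
    using R.finsum_singleton[OF g fin, of "\<lambda>_. x"] xc unfolding c2_def
    by (simp add: eq_commute)
  have c1p: "(\<forall>e\<in>Ob. c1 e \<in> D e) \<and> (\<forall>e. e \<notin> Ob \<longrightarrow> c1 e = \<zero>\<^bsub>A\<^esub>) \<and> x = finsum A c1 Ob"
    using xf s1 zero_D obj_mor f unfolding c1_def by auto
  have c2p: "(\<forall>e\<in>Ob. c2 e \<in> D e) \<and> (\<forall>e. e \<notin> Ob \<longrightarrow> c2 e = \<zero>\<^bsub>A\<^esub>) \<and> x = finsum A c2 Ob"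
    using xg s2 zero_D obj_mor g unfolding c2_def by auto
  have "c1 = c2" using ds xc c1p c2p unfolding direct_sum_objs_def by blast
  then have "c1 f = c2 f" by simp
  then show ?thesis using ne unfolding c1_def c2_def x_def by simp
qed

end


lemma skew_simps:
  "carrier (skew_ring H B D u act) = {x. (\<forall>g. g \<notin> gmor H \<longrightarrow> x g = \<zero>\<^bsub>B\<^esub>) \<and> finite {g \<in> gmor H. x g \<noteq> \<zero>\<^bsub>B\<^esub>} \<and>
                     (\<forall>g\<in>gmor H. x g \<in> D g)}"
  "add (skew_ring H B D u act) = (\<lambda>x y g. x g \<oplus>\<^bsub>B\<^esub> y g)"
  "zero (skew_ring H B D u act) = (\<lambda>g. \<zero>\<^bsub>B\<^esub>)"
  "one (skew_ring H B D u act) = (\<lambda>g. if g \<in> gobj H then u g else \<zero>\<^bsub>B\<^esub>)"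
  "mult (skew_ring H B D u act) = (\<lambda>x y k. if k \<in> gmor H then
                 finsum B (\<lambda>g. act g (act (ginv H g) (x g) \<otimes>\<^bsub>B\<^esub> y (gcmp H (ginv H g) k)))
                        {g \<in> gmor H. x g \<noteq> \<zero>\<^bsub>B\<^esub> \<and> gtgt H g = gtgt H k}
               else \<zero>\<^bsub>B\<^esub>)"
  unfolding skew_ring_def by simp_all

lemma skew_am:
  assumes B: "abelian_monoid B"
    and DD: "\<And>g. g \<in> gmor H \<Longrightarrow> D g \<subseteq> carrier B \<and> \<zero>\<^bsub>B\<^esub> \<in> D g \<and> (\<forall>x\<in>D g. \<forall>y\<in>D g. x \<oplus>\<^bsub>B\<^esub> y \<in> D g)"
  shows "abelian_monoid (skew_ring H B D u act)"
proof -
  interpret B: abelian_monoid B by (rule B)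
  let ?S = "skew_ring H B D u act"
  have vc: "x g \<in> carrier B" if "x \<in> carrier ?S" for x g
  proof (cases "g \<in> gmor H")
    case True
    then show ?thesis using that DD[OF True] by (auto simp: skew_simps)
  next
    case False
    then show ?thesis using that B.zero_closed by (auto simp: skew_simps)
  qed
  show ?thesis
  proof (rule abelian_monoidI)
    fix x y assume x: "x \<in> carrier ?S" and y: "y \<in> carrier ?S"
    have "{g \<in> gmor H. x g \<oplus>\<^bsub>B\<^esub> y g \<noteq> \<zero>\<^bsub>B\<^esub>} \<subseteq> {g \<in> gmor H. x g \<noteq> \<zero>\<^bsub>B\<^esub>} \<union> {g \<in> gmor H. y g \<noteq> \<zero>\<^bsub>B\<^esub>}"
      by auto
    moreover have "finite ({g \<in> gmor H. x g \<noteq> \<zero>\<^bsub>B\<^esub>} \<union> {g \<in> gmor H. y g \<noteq> \<zero>\<^bsub>B\<^esub>})"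
      using x y by (simp add: skew_simps)
    ultimately have "finite {g \<in> gmor H. x g \<oplus>\<^bsub>B\<^esub> y g \<noteq> \<zero>\<^bsub>B\<^esub>}" by (rule finite_subset)
    then show "x \<oplus>\<^bsub>?S\<^esub> y \<in> carrier ?S"
      using x y DD by (auto simp: skew_simps)
  next
    show "\<zero>\<^bsub>?S\<^esub> \<in> carrier ?S" using DD by (auto simp: skew_simps)
  next
    fix x y z assume "x \<in> carrier ?S" "y \<in> carrier ?S" "z \<in> carrier ?S"
    then show "x \<oplus>\<^bsub>?S\<^esub> y \<oplus>\<^bsub>?S\<^esub> z = x \<oplus>\<^bsub>?S\<^esub> (y \<oplus>\<^bsub>?S\<^esub> z)"
      using vc by (auto simp: skew_simps B.a_assoc)
  next
    fix x assume "x \<in> carrier ?S"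
    then show "\<zero>\<^bsub>?S\<^esub> \<oplus>\<^bsub>?S\<^esub> x = x" using vc by (auto simp: skew_simps)
  next
    fix x y assume "x \<in> carrier ?S" "y \<in> carrier ?S"
    then show "x \<oplus>\<^bsub>?S\<^esub> y = y \<oplus>\<^bsub>?S\<^esub> x" using vc by (auto simp: skew_simps B.a_comm)
  qed
qed

lemma class_simps:
  "carrier (class_ring G A D u e) = {finsum A c (obj_class G e) | c. \<forall>f\<in>obj_class G e. c f \<in> D f}"
  "add (class_ring G A D u e) = add A"
  "zero (class_ring G A D u e) = zero A"
  "mult (class_ring G A D u e) = mult A"
  unfolding class_ring_def by simp_all

context PA begin

abbreviation "S \<equiv> skew_ring G A D u act"
abbreviation "Ae e \<equiv> class_ring G A D u e"
abbreviation "Ge e \<equiv> sub_gpd G e"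
abbreviation "Se e \<equiv> skew_ring (Ge e) (Ae e) D u act"
abbreviation "Me e \<equiv> gmor (Ge e)"

lemma sub_simps: "gmor (Ge e) = {g \<in> M. s g \<in> C e \<and> t g \<in> C e}" "gobj (Ge e) = C e"
  "gsrc (Ge e) = s" "gtgt (Ge e) = t" "gcmp (Ge e) = cmp" "ginv (Ge e) = iv"
  unfolding sub_gpd_def by simp_all

lemma C_fin: "finite (C e)" using fin C_sub finite_subset by blast

lemma single_sum: assumes f: "f \<in> C e" and x: "x \<in> carrier A"
  shows "finsum A (\<lambda>f'. if f' = f then x else \<zero>\<^bsub>A\<^esub>) (C e) = x"
  using R.finsum_singleton[OF f C_fin, of "\<lambda>_. x"] x by (simp add: eq_commute)

lemma D_Ae: assumes f: "f \<in> C e" shows "D f \<subseteq> carrier (Ae e)"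
proof
  fix x assume x: "x \<in> D f"
  have fm: "f \<in> M" using f C_sub obj_mor by blast
  have xc: "x \<in> carrier A" using D_c[OF fm x] .
  have "\<forall>f'\<in>C e. (if f' = f then x else \<zero>\<^bsub>A\<^esub>) \<in> D f'"
    using x zero_D C_sub obj_mor by auto
  then have "x = finsum A (\<lambda>f'. if f' = f then x else \<zero>\<^bsub>A\<^esub>) (C e) \<and>
     (\<forall>f'\<in>C e. (if f' = f then x else \<zero>\<^bsub>A\<^esub>) \<in> D f')" using single_sum[OF f xc] by simp
  then show "x \<in> carrier (Ae e)" unfolding class_simps by blast
qed

lemma Ae_c: "carrier (Ae e) \<subseteq> carrier A"
proof
  fix x assume "x \<in> carrier (Ae e)"
  then obtain c where c: "x = finsum A c (C e)" "\<forall>f\<in>C e. c f \<in> D f" unfolding class_simps by auto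
  have "c \<in> C e \<rightarrow> carrier A" using c(2) D_c C_sub obj_mor by blast
  then show "x \<in> carrier A" using c(1) R.finsum_closed by simp
qed

lemma Ae_am: "abelian_monoid (Ae e)"
proof (rule abelian_monoidI)
  fix x y assume "x \<in> carrier (Ae e)" "y \<in> carrier (Ae e)"
  then obtain c c' where c: "x = finsum A c (C e)" "\<forall>f\<in>C e. c f \<in> D f"
    and c': "y = finsum A c' (C e)" "\<forall>f\<in>C e. c' f \<in> D f" unfolding class_simps by auto
  have cc: "c \<in> C e \<rightarrow> carrier A" "c' \<in> C e \<rightarrow> carrier A" using c(2) c'(2) D_c C_sub obj_mor by blast+
  have "x \<oplus>\<^bsub>A\<^esub> y = finsum A (\<lambda>f. c f \<oplus>\<^bsub>A\<^esub> c' f) (C e)"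
    using R.finsum_addf[OF cc] c c' by simp
  moreover have "\<forall>f\<in>C e. c f \<oplus>\<^bsub>A\<^esub> c' f \<in> D f" using c(2) c'(2) D_add C_sub obj_mor by blast
  ultimately show "x \<oplus>\<^bsub>Ae e\<^esub> y \<in> carrier (Ae e)" unfolding class_simps by blast
next
  have "\<zero>\<^bsub>A\<^esub> = finsum A (\<lambda>_. \<zero>\<^bsub>A\<^esub>) (C e)" by (simp add: R.finsum_zero)
  moreover have "\<forall>f\<in>C e. \<zero>\<^bsub>A\<^esub> \<in> D f" using zero_D C_sub obj_mor by blast
  ultimately show "\<zero>\<^bsub>Ae e\<^esub> \<in> carrier (Ae e)" unfolding class_simps by blast
next
  fix x y z assume "x \<in> carrier (Ae e)" "y \<in> carrier (Ae e)" "z \<in> carrier (Ae e)"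
  then have "x \<in> carrier A" "y \<in> carrier A" "z \<in> carrier A" using Ae_c by blast+
  then show "x \<oplus>\<^bsub>Ae e\<^esub> y \<oplus>\<^bsub>Ae e\<^esub> z = x \<oplus>\<^bsub>Ae e\<^esub> (y \<oplus>\<^bsub>Ae e\<^esub> z)"
    by (simp add: class_simps R.a_assoc)
next
  fix x assume "x \<in> carrier (Ae e)"
  then have "x \<in> carrier A" using Ae_c by blast
  then show "\<zero>\<^bsub>Ae e\<^esub> \<oplus>\<^bsub>Ae e\<^esub> x = x" by (simp add: class_simps)
next
  fix x y assume "x \<in> carrier (Ae e)" "y \<in> carrier (Ae e)"
  then have "x \<in> carrier A" "y \<in> carrier A" using Ae_c by blast+
  then show "x \<oplus>\<^bsub>Ae e\<^esub> y = y \<oplus>\<^bsub>Ae e\<^esub> x" by (simp add: class_simps R.a_comm)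
qed

lemma S_am: "abelian_monoid S"
  by (rule skew_am) (use R.abelian_monoid_axioms D_c zero_D D_add in auto)

lemma Me_D: "g \<in> Me e \<Longrightarrow> D g \<subseteq> carrier (Ae e)"
  using D_tgt D_Ae by (fastforce simp: sub_simps)

lemma Se_am: "abelian_monoid (Se e)"
proof (rule skew_am[OF Ae_am])
  fix g assume g: "g \<in> Me e"
  then have gm: "g \<in> M" by (simp add: sub_simps)
  show "D g \<subseteq> carrier (Ae e) \<and> \<zero>\<^bsub>Ae e\<^esub> \<in> D g \<and> (\<forall>x\<in>D g. \<forall>y\<in>D g. x \<oplus>\<^bsub>Ae e\<^esub> y \<in> D g)"
    using Me_D[OF g] zero_D[OF gm] D_add[OF gm] by (simp add: class_simps)
qed

lemma finsum_Ae: assumes "finite I" "\<And>i. i \<in> I \<Longrightarrow> F i \<in> carrier (Ae e)"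
  shows "finsum (Ae e) F I = finsum A F I"
  using assms
proof (induction I rule: finite_induct)
  case empty
  then show ?case using abelian_monoid.finsum_empty[OF Ae_am] R.finsum_empty by (simp add: class_simps)
next
  case (insert x I)
  have "finsum (Ae e) F (insert x I) = F x \<oplus>\<^bsub>Ae e\<^esub> finsum (Ae e) F I"
    by (rule abelian_monoid.finsum_insert[OF Ae_am]) (use insert in auto)
  moreover have "finsum A F (insert x I) = F x \<oplus>\<^bsub>A\<^esub> finsum A F I"
    by (rule R.finsum_insert) (use insert Ae_c in auto)
  ultimately show ?case using insert by (simp add: class_simps)
qed

end


context PA begin

definition T :: "('g \<Rightarrow> 'a) \<Rightarrow> ('g \<Rightarrow> 'a) \<Rightarrow> 'g \<Rightarrow> 'g \<Rightarrow> 'a" where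
  "T x y k g = act g (act (iv g) (x g) \<otimes>\<^bsub>A\<^esub> y (cmp (iv g) k))"

definition I :: "('g \<Rightarrow> 'a) \<Rightarrow> 'g \<Rightarrow> 'g set" where
  "I x k = {g \<in> M. x g \<noteq> \<zero>\<^bsub>A\<^esub> \<and> t g = t k}"

definition P :: "'g \<Rightarrow> ('g \<Rightarrow> 'a) \<Rightarrow> 'g \<Rightarrow> 'a" where
  "P e x = (\<lambda>g. if g \<in> Me e then x g else \<zero>\<^bsub>A\<^esub>)"

lemma S_carrier: "x \<in> carrier S \<longleftrightarrow> (\<forall>g. g \<notin> M \<longrightarrow> x g = \<zero>\<^bsub>A\<^esub>) \<and> finite {g \<in> M. x g \<noteq> \<zero>\<^bsub>A\<^esub>} \<and>
   (\<forall>g\<in>M. x g \<in> D g)" by (simp add: skew_simps)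

lemma Se_carrier: "x \<in> carrier (Se e) \<longleftrightarrow> (\<forall>g. g \<notin> Me e \<longrightarrow> x g = \<zero>\<^bsub>A\<^esub>) \<and> finite {g \<in> Me e. x g \<noteq> \<zero>\<^bsub>A\<^esub>} \<and>
   (\<forall>g\<in>Me e. x g \<in> D g)" by (simp add: skew_simps class_simps)

lemma Me_M: "g \<in> Me e \<Longrightarrow> g \<in> M" by (simp add: sub_simps)

lemma val_c: "x \<in> carrier S \<Longrightarrow> x g \<in> carrier A"
  using D_c by (cases "g \<in> M") (auto simp: S_carrier)

lemma mult_S: "k \<in> M \<Longrightarrow> (x \<otimes>\<^bsub>S\<^esub> y) k = finsum A (T x y k) (I x k)"
  by (simp add: skew_simps T_def[abs_def] I_def)

lemma mult_S_out: "k \<notin> M \<Longrightarrow> (x \<otimes>\<^bsub>S\<^esub> y) k = \<zero>\<^bsub>A\<^esub>"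
  by (simp add: skew_simps)

lemma I_fin: "x \<in> carrier S \<Longrightarrow> finite (I x k)"
  unfolding I_def S_carrier by (auto elim: rev_finite_subset)

lemma T_D: assumes x: "x \<in> carrier S" and y: "y \<in> carrier S" and k: "k \<in> M" and g: "g \<in> I x k"
  shows "T x y k g \<in> D k"
proof -
  have gm: "g \<in> M" and tt: "t g = t k" using g I_def by auto
  show ?thesis unfolding T_def
    by (rule term_in[OF gm k tt]) (use x y gm ginvk[OF gm k tt] in \<open>auto simp: S_carrier\<close>)
qed

lemma finsum_D: assumes k: "k \<in> M" shows "finite J \<Longrightarrow> (\<And>i. i \<in> J \<Longrightarrow> F i \<in> D k) \<Longrightarrow> finsum A F J \<in> D k"
proof (induction J rule: finite_induct)
  case empty
  then show ?case using zero_D[OF k] by simp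
next
  case (insert a J)
  have "finsum A F (insert a J) = F a \<oplus>\<^bsub>A\<^esub> finsum A F J"
    by (rule R.finsum_insert) (use insert D_c[OF k] in auto)
  then show ?case using insert D_add[OF k] by simp
qed

lemma finsum_zeroes: "finite J \<Longrightarrow> (\<And>i. i \<in> J \<Longrightarrow> F i = \<zero>\<^bsub>A\<^esub>) \<Longrightarrow> finsum A F J = \<zero>\<^bsub>A\<^esub>"
proof -
  assume "finite J" "\<And>i. i \<in> J \<Longrightarrow> F i = \<zero>\<^bsub>A\<^esub>"
  then have "finsum A F J = finsum A (\<lambda>_. \<zero>\<^bsub>A\<^esub>) J" by (intro R.finsum_cong') auto
  then show ?thesis by (simp add: R.finsum_zero)
qed

lemma T_zero: assumes x: "x \<in> carrier S" and g: "g \<in> M" and yz: "y (cmp (iv g) k) = \<zero>\<^bsub>A\<^esub>"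
  shows "T x y k g = \<zero>\<^bsub>A\<^esub>"
proof -
  have ig: "iv g \<in> M" using inv_mor g by simp
  have "act (iv g) (x g) \<in> D (iv g)" using act_in[OF ig] x g inv_inv[OF g] by (simp add: S_carrier)
  then have "act (iv g) (x g) \<in> carrier A" using D_c ig by blast
  then show ?thesis unfolding T_def using yz act_zero g by simp
qed

lemma mult_closed: assumes x: "x \<in> carrier S" and y: "y \<in> carrier S" shows "x \<otimes>\<^bsub>S\<^esub> y \<in> carrier S"
proof -
  let ?z = "x \<otimes>\<^bsub>S\<^esub> y"
  have A1: "\<forall>k. k \<notin> M \<longrightarrow> ?z k = \<zero>\<^bsub>A\<^esub>" using mult_S_out by simp
  have A2: "\<forall>k\<in>M. ?z k \<in> D k"
  proof
    fix k assume k: "k \<in> M"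
    show "?z k \<in> D k" unfolding mult_S[OF k] by (rule finsum_D[OF k I_fin[OF x] T_D[OF x y k]])
  qed
  let ?X = "{g \<in> M. x g \<noteq> \<zero>\<^bsub>A\<^esub>}" and ?Y = "{g \<in> M. y g \<noteq> \<zero>\<^bsub>A\<^esub>}"
  have "{k \<in> M. ?z k \<noteq> \<zero>\<^bsub>A\<^esub>} \<subseteq> (\<lambda>(g, h). cmp g h) ` (?X \<times> ?Y)"
  proof
    fix k assume kk: "k \<in> {k \<in> M. ?z k \<noteq> \<zero>\<^bsub>A\<^esub>}"
    then have k: "k \<in> M" and nz: "finsum A (T x y k) (I x k) \<noteq> \<zero>\<^bsub>A\<^esub>" using mult_S by auto
    then obtain g where g: "g \<in> I x k" and Tg: "T x y k g \<noteq> \<zero>\<^bsub>A\<^esub>"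
      using finsum_zeroes[OF I_fin[OF x]] by blast
    have gm: "g \<in> M" and tt: "t g = t k" and xg: "x g \<noteq> \<zero>\<^bsub>A\<^esub>" using g I_def by auto
    have yh: "y (cmp (iv g) k) \<noteq> \<zero>\<^bsub>A\<^esub>" using T_zero[OF x gm] Tg by blast
    have "k = cmp g (cmp (iv g) k)" using ginvk[OF gm k tt] by simp
    moreover have "(g, cmp (iv g) k) \<in> ?X \<times> ?Y" using gm xg yh ginvk[OF gm k tt] by simp
    ultimately show "k \<in> (\<lambda>(g, h). cmp g h) ` (?X \<times> ?Y)" by force
  qed
  moreover have "finite ((\<lambda>(g, h). cmp g h) ` (?X \<times> ?Y))" using x y by (simp add: S_carrier)
  ultimately have "finite {k \<in> M. ?z k \<noteq> \<zero>\<^bsub>A\<^esub>}" by (rule finite_subset)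
  then show ?thesis using A1 A2 by (simp add: S_carrier)
qed

lemma K1: "x \<in> carrier S \<Longrightarrow> P e x \<in> carrier (Se e)"
  unfolding Se_carrier S_carrier P_def using Me_M
  by (auto elim: rev_finite_subset)

lemma K2: "y \<in> carrier (Se e) \<Longrightarrow> y \<in> carrier S"
  unfolding Se_carrier S_carrier using Me_M zero_D
  by (auto elim: rev_finite_subset)

lemma K2': "y \<in> carrier (Se e) \<Longrightarrow> P e y = y"
  unfolding Se_carrier P_def by auto

lemma Me_iff: "g \<in> Me e \<longleftrightarrow> g \<in> M \<and> s g \<in> C e \<and> t g \<in> C e" by (simp add: sub_simps)

lemma Me_t: "g \<in> M \<Longrightarrow> t g \<in> C e \<Longrightarrow> g \<in> Me e"
  using C_src Me_iff by blast

lemma Me_s: "g \<in> M \<Longrightarrow> s g \<in> C e \<Longrightarrow> g \<in> Me e"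
  using C_tgt Me_iff by blast

lemma K4: assumes x: "x \<in> carrier S" and y: "y \<in> carrier S"
  shows "P e (x \<otimes>\<^bsub>S\<^esub> y) = P e x \<otimes>\<^bsub>Se e\<^esub> P e y"
proof
  fix k
  show "P e (x \<otimes>\<^bsub>S\<^esub> y) k = (P e x \<otimes>\<^bsub>Se e\<^esub> P e y) k"
  proof (cases "k \<in> Me e")
    case False
    then show ?thesis by (simp add: P_def skew_simps class_simps)
  next
    case True
    have k: "k \<in> M" and tk: "t k \<in> C e" using True Me_iff by auto
    have Ieq: "{g \<in> Me e. P e x g \<noteq> \<zero>\<^bsub>Ae e\<^esub> \<and> gtgt (Ge e) g = gtgt (Ge e) k} = I x k"
      using Me_t tk by (auto simp: I_def P_def class_simps sub_simps)
    have Teq: "act g (act (ginv (Ge e) g) (P e x g) \<otimes>\<^bsub>Ae e\<^esub> P e y (gcmp (Ge e) (ginv (Ge e) g) k)) = T x y k g"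
      if g: "g \<in> I x k" for g
    proof -
      have gm: "g \<in> M" and tt: "t g = t k" using g I_def by auto
      have gM: "g \<in> Me e" using Me_t gm tt tk by simp
      have "cmp (iv g) k \<in> Me e" using ginvk[OF gm k tt] gM True unfolding Me_iff by auto
      with gM show ?thesis by (simp add: P_def T_def sub_simps class_simps)
    qed
    have TD: "T x y k g \<in> carrier (Ae e)" if "g \<in> I x k" for g
      using T_D[OF x y k that] D_tgt[OF k] D_Ae[OF tk] by blast
    have "(P e x \<otimes>\<^bsub>Se e\<^esub> P e y) k = finsum (Ae e) (\<lambda>g. act g (act (ginv (Ge e) g) (P e x g) \<otimes>\<^bsub>Ae e\<^esub> P e y (gcmp (Ge e) (ginv (Ge e) g) k))) (I x k)"
      using True Ieq by (simp add: skew_simps del: sub_simps)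
    also have "\<dots> = finsum (Ae e) (T x y k) (I x k)"
      by (rule abelian_monoid.finsum_cong'[OF Ae_am]) (use Teq TD in auto)
    also have "\<dots> = finsum A (T x y k) (I x k)"
      by (rule finsum_Ae) (use I_fin[OF x] TD in auto)
    also have "\<dots> = (x \<otimes>\<^bsub>S\<^esub> y) k" using mult_S[OF k] by simp
    finally show ?thesis using True by (simp add: P_def)
  qed
qed

lemma supp_P: "(\<And>k. k \<notin> Me e \<Longrightarrow> z k = \<zero>\<^bsub>A\<^esub>) \<Longrightarrow> P e z = z"
  unfolding P_def by auto

lemma K5a: assumes sc: "x \<in> carrier S" and a: "a \<in> carrier (Se e)"
  shows "x \<otimes>\<^bsub>S\<^esub> a = P e x \<otimes>\<^bsub>Se e\<^esub> a"
proof -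
  have aS: "a \<in> carrier S" using K2[OF a] .
  have "P e (x \<otimes>\<^bsub>S\<^esub> a) = x \<otimes>\<^bsub>S\<^esub> a"
  proof (rule supp_P)
    fix k assume nk: "k \<notin> Me e"
    show "(x \<otimes>\<^bsub>S\<^esub> a) k = \<zero>\<^bsub>A\<^esub>"
    proof (cases "k \<in> M")
      case False then show ?thesis using mult_S_out by simp
    next
      case k: True
      have "T x a k g = \<zero>\<^bsub>A\<^esub>" if g: "g \<in> I x k" for g
      proof -
        have gm: "g \<in> M" and tt: "t g = t k" using g I_def by auto
        have "cmp (iv g) k \<notin> Me e"
        proof
          assume "cmp (iv g) k \<in> Me e"
          then have "s (cmp (iv g) k) \<in> C e" unfolding Me_iff by blast
          then have "s k \<in> C e" using ginvk(2)[OF gm k tt] by simp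
          then show False using Me_s[OF k] nk by simp
        qed
        then have "a (cmp (iv g) k) = \<zero>\<^bsub>A\<^esub>" using a Se_carrier by blast
        then show ?thesis using T_zero[OF sc gm] by simp
      qed
      then show ?thesis using mult_S[OF k] finsum_zeroes[OF I_fin[OF sc]] by simp
    qed
  qed
  then show ?thesis using K4[OF sc aS] K2'[OF a] by simp
qed

lemma K5b: assumes sc: "x \<in> carrier S" and a: "a \<in> carrier (Se e)"
  shows "a \<otimes>\<^bsub>S\<^esub> x = a \<otimes>\<^bsub>Se e\<^esub> P e x"
proof -
  have aS: "a \<in> carrier S" using K2[OF a] .
  have "P e (a \<otimes>\<^bsub>S\<^esub> x) = a \<otimes>\<^bsub>S\<^esub> x"
  proof (rule supp_P)
    fix k assume nk: "k \<notin> Me e"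
    show "(a \<otimes>\<^bsub>S\<^esub> x) k = \<zero>\<^bsub>A\<^esub>"
    proof (cases "k \<in> M")
      case False then show ?thesis using mult_S_out by simp
    next
      case k: True
      have "I a k = {}"
      proof (rule ccontr)
        assume "I a k \<noteq> {}"
        then obtain g where g: "g \<in> M" "a g \<noteq> \<zero>\<^bsub>A\<^esub>" "t g = t k" unfolding I_def by auto
        then have "g \<in> Me e" using a Se_carrier by blast
        then have "t k \<in> C e" using g Me_iff by auto
        then show False using Me_t[OF k] nk by simp
      qed
      then show ?thesis using mult_S[OF k] by simp
    qed
  qed
  then show ?thesis using K4[OF aS sc] K2'[OF a] by simp
qed

end


definition lsum :: "('b, 'k) ring_scheme \<Rightarrow> ('c \<Rightarrow> 'b) \<Rightarrow> 'c list \<Rightarrow> 'b" where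
  "lsum Mo F xs = foldr (\<lambda>x acc. F x \<oplus>\<^bsub>Mo\<^esub> acc) xs \<zero>\<^bsub>Mo\<^esub>"

lemma lsum_simps [simp]: "lsum Mo F [] = \<zero>\<^bsub>Mo\<^esub>" "lsum Mo F (x # xs) = F x \<oplus>\<^bsub>Mo\<^esub> lsum Mo F xs"
  unfolding lsum_def by simp_all

lemma lsum_closed: "abelian_monoid Mo \<Longrightarrow> (\<And>x. x \<in> set xs \<Longrightarrow> F x \<in> carrier Mo) \<Longrightarrow> lsum Mo F xs \<in> carrier Mo"
  by (induction xs) (auto simp: abelian_monoid.a_closed abelian_monoid.zero_closed)

lemma finsum_lsum:
  assumes Mo: "abelian_monoid Mo"
  shows "(\<And>x. x \<in> set xs \<Longrightarrow> F x \<in> carrier Mo) \<Longrightarrow>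
    finsum Mo (\<lambda>i. F (xs ! i)) {..<length xs} = lsum Mo F xs"
proof (induction xs)
  case Nil
  then show ?case using abelian_monoid.finsum_empty[OF Mo] by simp
next
  case (Cons a xs)
  have e: "{..<length (a # xs)} = insert 0 (Suc ` {..<length xs})"
    by (auto simp: image_iff less_Suc_eq_0_disj)
  have cl: "(\<lambda>i. F ((a # xs) ! i)) \<in> (Suc ` {..<length xs}) \<rightarrow> carrier Mo"
    using Cons.prems by auto
  have "finsum Mo (\<lambda>i. F ((a # xs) ! i)) {..<length (a # xs)}
     = F ((a # xs) ! 0) \<oplus>\<^bsub>Mo\<^esub> finsum Mo (\<lambda>i. F ((a # xs) ! i)) (Suc ` {..<length xs})"
    unfolding e by (rule abelian_monoid.finsum_insert[OF Mo]) (use Cons.prems cl in auto)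
  also have "finsum Mo (\<lambda>i. F ((a # xs) ! i)) (Suc ` {..<length xs}) = finsum Mo (\<lambda>i. F (xs ! i)) {..<length xs}"
    using abelian_monoid.finsum_reindex[OF Mo cl] by simp
  finally show ?case using Cons by simp
qed

lemma lsum_append: "abelian_monoid Mo \<Longrightarrow> (\<And>x. x \<in> set (xs @ ys) \<Longrightarrow> F x \<in> carrier Mo) \<Longrightarrow>
  lsum Mo F (xs @ ys) = lsum Mo F xs \<oplus>\<^bsub>Mo\<^esub> lsum Mo F ys"
proof (induction xs)
  case Nil
  have "lsum Mo F ys \<in> carrier Mo" using lsum_closed[OF Nil(1), of ys F] Nil(2) by simp
  then show ?case using abelian_monoid.l_zero[OF Nil(1)] by simp
next
  case (Cons a xs)
  then show ?case using lsum_closed[OF Cons(2), of xs F] lsum_closed[OF Cons(2), of ys F]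
    by (simp add: abelian_monoid.a_assoc)
qed

lemma lsum_concat: "abelian_monoid Mo \<Longrightarrow> (\<And>x. x \<in> set (concat xss) \<Longrightarrow> F x \<in> carrier Mo) \<Longrightarrow>
  lsum Mo F (concat xss) = lsum Mo (lsum Mo F) xss"
proof (induction xss)
  case Nil then show ?case by simp
next
  case (Cons a xss)
  have "lsum Mo F (a @ concat xss) = lsum Mo F a \<oplus>\<^bsub>Mo\<^esub> lsum Mo F (concat xss)"
    by (rule lsum_append) (use Cons.prems in auto)
  then show ?case using Cons by simp
qed

section \<open>Tensors\<close>

definition push :: "('p \<Rightarrow> 'q) \<Rightarrow> ('p \<Rightarrow> int) \<Rightarrow> 'q \<Rightarrow> int" where
  "push m c = (\<lambda>q. sum c {p. c p \<noteq> 0 \<and> m p = q})"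

lemma push_F: assumes "finite F" "{p. c p \<noteq> 0} \<subseteq> F" shows "push m c q = sum c {p \<in> F. m p = q}"
  unfolding push_def
  by (rule sum.mono_neutral_left) (use assms in \<open>auto elim: finite_subset\<close>)

lemma push_diff: assumes "finite {p. c p \<noteq> 0}" "finite {p. d p \<noteq> 0}"
  shows "push m (\<lambda>p. c p - d p) = (\<lambda>q. push m c q - push m d q)"
proof
  fix q
  let ?F = "{p. c p \<noteq> 0} \<union> {p. d p \<noteq> 0}"
  have f: "finite ?F" using assms by simp
  have "push m (\<lambda>p. c p - d p) q = sum (\<lambda>p. c p - d p) {p \<in> ?F. m p = q}"
    by (rule push_F[OF f]) auto
  also have "\<dots> = sum c {p \<in> ?F. m p = q} - sum d {p \<in> ?F. m p = q}"
    by (simp add: sum_subtractf)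
  also have "\<dots> = push m c q - push m d q"
    using push_F[OF f, of c m q] push_F[OF f, of d m q] by auto
  finally show "push m (\<lambda>p. c p - d p) q = push m c q - push m d q" .
qed

lemma push_add: assumes "finite {p. c p \<noteq> 0}" "finite {p. d p \<noteq> 0}"
  shows "push m (\<lambda>p. c p + d p) = (\<lambda>q. push m c q + push m d q)"
proof
  fix q
  let ?F = "{p. c p \<noteq> 0} \<union> {p. d p \<noteq> 0}"
  have f: "finite ?F" using assms by simp
  have "push m (\<lambda>p. c p + d p) q = sum (\<lambda>p. c p + d p) {p \<in> ?F. m p = q}"
    by (rule push_F[OF f]) auto
  also have "\<dots> = sum c {p \<in> ?F. m p = q} + sum d {p \<in> ?F. m p = q}"
    by (simp add: sum.distrib)
  also have "\<dots> = push m c q + push m d q"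
    using push_F[OF f, of c m q] push_F[OF f, of d m q] by auto
  finally show "push m (\<lambda>p. c p + d p) q = push m c q + push m d q" .
qed

lemma push_neg: "push m (\<lambda>p. - c p) = (\<lambda>q. - push m c q)"
  unfolding push_def by (simp add: sum_negf)

lemma push_zero: "push m (\<lambda>_. 0) = (\<lambda>_. 0)"
  unfolding push_def by simp

lemma pt_fin: "finite {q. pt p q \<noteq> 0}"
  unfolding pt_def by simp

lemma push_pt: "push m (pt p) = pt (m p)"
proof
  fix q
  have "{p'. pt p p' \<noteq> 0} = {p}" unfolding pt_def by auto
  then have "push m (pt p) q = sum (pt p) {p' \<in> {p}. m p' = q}"
    using push_F[of "{p}" "pt p" m q] by simp
  also have "{p' \<in> {p}. m p' = q} = (if m p = q then {p} else {})" by auto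
  then have "sum (pt p) {p' \<in> {p}. m p' = q} = pt (m p) q" unfolding pt_def by simp
  finally show "push m (pt p) q = pt (m p) q" .
qed

lemma fin_diff: "finite {p. c p \<noteq> (0::int)} \<Longrightarrow> finite {p. d p \<noteq> 0} \<Longrightarrow> finite {p. c p - d p \<noteq> 0}"
  by (rule finite_subset[of _ "{p. c p \<noteq> 0} \<union> {p. d p \<noteq> 0}"]) auto

lemma push_gen: "push m (\<lambda>p. pt a p - pt b p - pt c p) = (\<lambda>q. pt (m a) q - pt (m b) q - pt (m c) q)"
proof -
  have 1: "push m (\<lambda>p. pt a p - pt b p - pt c p) = (\<lambda>q. push m (\<lambda>p. pt a p - pt b p) q - push m (pt c) q)"
    by (rule push_diff[OF fin_diff[OF pt_fin pt_fin] pt_fin])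
  have 2: "push m (\<lambda>p. pt a p - pt b p) = (\<lambda>q. push m (pt a) q - push m (pt b) q)"
    by (rule push_diff[OF pt_fin pt_fin])
  show ?thesis unfolding 1 2 push_pt ..
qed

lemma push_gen2: "push m (\<lambda>p. pt a p - pt b p) = (\<lambda>q. pt (m a) q - pt (m b) q)"
  unfolding push_diff[OF pt_fin pt_fin] push_pt ..

lemma tr_fin: "c \<in> tensor_rel R S phi \<Longrightarrow> finite {p. c p \<noteq> 0}"
proof (induction rule: tensor_rel.induct)
  case tr_zero then show ?case by simp
next
  case (tr_add x y) then show ?case
    by (rule_tac finite_subset[of _ "{p. x p \<noteq> 0} \<union> {p. y p \<noteq> 0}"]) auto
next
  case (tr_neg x) then show ?case by simp
next
  case (tr_left a b c) show ?case by (rule fin_diff[OF fin_diff[OF pt_fin pt_fin] pt_fin])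
next
  case (tr_right a b c) show ?case by (rule fin_diff[OF fin_diff[OF pt_fin pt_fin] pt_fin])
next
  case (tr_mid a b c) show ?case by (rule fin_diff[OF pt_fin pt_fin])
qed

lemma tr_push:
  assumes L: "\<And>a b c. a \<in> carrier S \<Longrightarrow> b \<in> carrier S \<Longrightarrow> c \<in> carrier S \<Longrightarrow>
     (\<lambda>p. pt (m (a \<oplus>\<^bsub>S\<^esub> b, c)) p - pt (m (a, c)) p - pt (m (b, c)) p) \<in> tensor_rel R' S' phi'"
  and Rr: "\<And>a b c. a \<in> carrier S \<Longrightarrow> b \<in> carrier S \<Longrightarrow> c \<in> carrier S \<Longrightarrow>
     (\<lambda>p. pt (m (a, b \<oplus>\<^bsub>S\<^esub> c)) p - pt (m (a, b)) p - pt (m (a, c)) p) \<in> tensor_rel R' S' phi'"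
  and Mi: "\<And>a b r. a \<in> carrier S \<Longrightarrow> b \<in> carrier S \<Longrightarrow> r \<in> carrier R \<Longrightarrow>
     (\<lambda>p. pt (m (a \<otimes>\<^bsub>S\<^esub> phi r, b)) p - pt (m (a, phi r \<otimes>\<^bsub>S\<^esub> b)) p) \<in> tensor_rel R' S' phi'"
  shows "c \<in> tensor_rel R S phi \<Longrightarrow> push m c \<in> tensor_rel R' S' phi'"
proof (induction rule: tensor_rel.induct)
  case tr_zero then show ?case by (simp add: push_zero tensor_rel.tr_zero)
next
  case (tr_add x y) then show ?case by (simp add: push_add tr_fin tensor_rel.tr_add)
next
  case (tr_neg x) then show ?case by (simp add: push_neg tensor_rel.tr_neg)
next
  case (tr_left a b c) then show ?case using L by (simp add: push_gen)
next
  case (tr_right a b c) then show ?case using Rr by (simp add: push_gen)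
next
  case (tr_mid a b r) then show ?case using Mi by (simp add: push_gen2)
qed

lemma coeffs_Nil: "coeffs [] = (\<lambda>_. 0)" unfolding coeffs_def by simp
lemma coeffs_Cons: "coeffs (x # xs) = (\<lambda>p. pt x p + coeffs xs p)"
  unfolding coeffs_def pt_def by auto
lemma coeffs_append: "coeffs (xs @ ys) = (\<lambda>p. coeffs xs p + coeffs ys p)"
  unfolding coeffs_def by auto
lemma coeffs_fin: "finite {p. coeffs xs p \<noteq> 0}"
  by (rule finite_subset[of _ "set xs"]) (auto simp: coeffs_def count_list_0_iff)

lemma push_coeffs: "push m (coeffs xs) = coeffs (map m xs)"
proof (induction xs)
  case Nil then show ?case by (simp add: coeffs_Nil push_zero)
next
  case (Cons a xs)
  then show ?case by (simp add: coeffs_Cons push_add[OF pt_fin coeffs_fin] push_pt)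
qed

lemma tensor_eq_push:
  assumes "tensor_eq R S phi xs ys"
    and "\<And>c. c \<in> tensor_rel R S phi \<Longrightarrow> push m c \<in> tensor_rel R' S' phi'"
  shows "tensor_eq R' S' phi' (map m xs) (map m ys)"
proof -
  have "push m (\<lambda>p. coeffs xs p - coeffs ys p) \<in> tensor_rel R' S' phi'"
    using assms unfolding tensor_eq_def by blast
  moreover have "push m (\<lambda>p. coeffs xs p - coeffs ys p) = (\<lambda>q. coeffs (map m xs) q - coeffs (map m ys) q)"
    unfolding push_diff[OF coeffs_fin coeffs_fin] push_coeffs ..
  ultimately show ?thesis unfolding tensor_eq_def by simp
qed

lemma tensor_eq_append:
  assumes "tensor_eq R S phi xs ys" "tensor_eq R S phi xs' ys'"
  shows "tensor_eq R S phi (xs @ xs') (ys @ ys')"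
proof -
  have "(\<lambda>p. coeffs (xs @ xs') p - coeffs (ys @ ys') p) =
    (\<lambda>p. (coeffs xs p - coeffs ys p) + (coeffs xs' p - coeffs ys' p))"
    by (auto simp: coeffs_append)
  then show ?thesis using assms unfolding tensor_eq_def by (simp add: tensor_rel.tr_add)
qed

lemma tensor_eq_Nil: "tensor_eq R S phi [] []"
  unfolding tensor_eq_def coeffs_def by (simp add: tensor_rel.tr_zero)

lemma tensor_eq_concat:
  "(\<And>i. i \<in> set L \<Longrightarrow> tensor_eq R S phi (f i) (g i)) \<Longrightarrow>
   tensor_eq R S phi (concat (map f L)) (concat (map g L))"
  by (induction L) (auto intro: tensor_eq_append tensor_eq_Nil)



lemma lsum_map: "lsum Mo F (map m xs) = lsum Mo (\<lambda>x. F (m x)) xs"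
  by (induction xs) auto

lemma lsum_cong: "(\<And>x. x \<in> set xs \<Longrightarrow> F x = F' x) \<Longrightarrow> lsum Mo F xs = lsum Mo F' xs"
  by (induction xs) auto

lemma tensor_eq_mono: "tensor_rel R S phi \<subseteq> tensor_rel R' S' phi' \<Longrightarrow> tensor_eq R S phi xs ys \<Longrightarrow>
   tensor_eq R' S' phi' xs ys"
  unfolding tensor_eq_def by blast

context PA begin

abbreviation "phi \<equiv> skew_emb G A u"
abbreviation "phie e \<equiv> skew_emb (Ge e) (Ae e) u"

definition rr :: "'g \<Rightarrow> 'a \<Rightarrow> 'a" where "rr e r = finsum A (\<lambda>f. r \<otimes>\<^bsub>A\<^esub> u f) (C e)"

lemma phi_c: assumes r: "r \<in> carrier A" shows "phi r \<in> carrier S"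
proof -
  have "{g \<in> M. phi r g \<noteq> \<zero>\<^bsub>A\<^esub>} \<subseteq> Ob" by (auto simp: skew_emb_def)
  then have "finite {g \<in> M. phi r g \<noteq> \<zero>\<^bsub>A\<^esub>}" using fin finite_subset by blast
  moreover have "\<forall>g\<in>M. phi r g \<in> D g" using D_def'[symmetric] r zero_D by (auto simp: skew_emb_def)
  moreover have "\<forall>g. g \<notin> M \<longrightarrow> phi r g = \<zero>\<^bsub>A\<^esub>" using obj_mor by (auto simp: skew_emb_def)
  ultimately show ?thesis by (simp add: S_carrier)
qed

lemma P_phi: "P e (phi r) = phie e r"
proof
  fix g
  show "P e (phi r) g = phie e r g"
  proof (cases "g \<in> C e")
    case True
    then have "g \<in> Ob" using C_sub by blast
    then have "g \<in> Me e" using True Me_iff obj_mor obj_st by auto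
    then show ?thesis using True \<open>g \<in> Ob\<close> by (simp add: P_def skew_emb_def sub_simps class_simps)
  next
    case False
    have "\<not> (g \<in> Me e \<and> g \<in> Ob)" using False Me_iff obj_st by auto
    then show ?thesis using False by (auto simp: P_def skew_emb_def sub_simps class_simps)
  qed
qed

lemma rr_c: assumes r: "r \<in> carrier A" shows "rr e r \<in> carrier (Ae e)"
proof -
  have "\<forall>f\<in>C e. r \<otimes>\<^bsub>A\<^esub> u f \<in> D f" using D_def' r C_sub obj_mor by blast
  then show ?thesis unfolding class_simps rr_def by blast
qed

lemma rr_phie: assumes r: "r \<in> carrier A" shows "phie e (rr e r) = phie e r"
proof
  fix g
  show "phie e (rr e r) g = phie e r g"
  proof (cases "g \<in> C e")
    case False then show ?thesis by (simp add: skew_emb_def sub_simps class_simps)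
  next
    case True
    have gO: "g \<in> Ob" using True C_sub by blast
    have gm: "g \<in> M" using gO obj_mor by simp
    have uc: "(\<lambda>f. r \<otimes>\<^bsub>A\<^esub> u f) \<in> C e \<rightarrow> carrier A" using r u_c C_sub obj_mor by blast
    have "rr e r \<otimes>\<^bsub>A\<^esub> u g = finsum A (\<lambda>f. r \<otimes>\<^bsub>A\<^esub> u f \<otimes>\<^bsub>A\<^esub> u g) (C e)"
      unfolding rr_def by (rule R.finsum_ldistr[OF C_fin u_c[OF gm] uc])
    also have "\<dots> = finsum A (\<lambda>f. if f = g then r \<otimes>\<^bsub>A\<^esub> u g else \<zero>\<^bsub>A\<^esub>) (C e)"
    proof (rule R.finsum_cong')
      fix f assume f: "f \<in> C e"
      have fO: "f \<in> Ob" using f C_sub by blast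
      have fm: "f \<in> M" using fO obj_mor by simp
      show "r \<otimes>\<^bsub>A\<^esub> u f \<otimes>\<^bsub>A\<^esub> u g = (if f = g then r \<otimes>\<^bsub>A\<^esub> u g else \<zero>\<^bsub>A\<^esub>)"
      proof (cases "f = g")
        case True then show ?thesis using r u_c[OF gm] u_idem[OF gm] by (simp add: R.m_assoc)
      next
        case False
        then have "u f \<otimes>\<^bsub>A\<^esub> u g = \<zero>\<^bsub>A\<^esub>" using orth fO gO by blast
        then show ?thesis using False r u_c[OF gm] u_c[OF fm] by (simp add: R.m_assoc)
      qed
    qed (use r u_c gm in auto)
    also have "\<dots> = r \<otimes>\<^bsub>A\<^esub> u g" using single_sum[OF True] r u_c[OF gm] by simp
    finally show ?thesis using True by (simp add: skew_emb_def sub_simps class_simps)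
  qed
qed

lemma P_add: "P e (a \<oplus>\<^bsub>S\<^esub> b) = P e a \<oplus>\<^bsub>Se e\<^esub> P e b"
  by (auto simp: P_def skew_simps class_simps)

lemma lsum_P: "P e (lsum S F xs) = lsum (Se e) (\<lambda>x. P e (F x)) xs"
proof (induction xs)
  case Nil then show ?case by (auto simp: P_def skew_simps class_simps)
next
  case (Cons a xs) then show ?case by (simp add: P_add)
qed

lemma lsum_S_Se: "lsum S F xs = lsum (Se e) F xs"
  unfolding lsum_def by (simp add: skew_simps class_simps)

lemma P_one: "P e (\<one>\<^bsub>S\<^esub>) = \<one>\<^bsub>Se e\<^esub>"
proof
  fix g show "P e (\<one>\<^bsub>S\<^esub>) g = (\<one>\<^bsub>Se e\<^esub>) g"
    using Me_iff C_sub obj_mor obj_st by (auto simp: P_def skew_simps class_simps sub_simps)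
qed

lemma lsum_pt: "(lsum S F xs) g = lsum A (\<lambda>x. F x g) xs"
  by (induction xs) (auto simp: skew_simps)

lemma rel_incl: "tensor_rel (Ae e) (Se e) (phie e) \<subseteq> tensor_rel A S phi"
proof
  fix c assume "c \<in> tensor_rel (Ae e) (Se e) (phie e)"
  then show "c \<in> tensor_rel A S phi"
  proof (induction rule: tensor_rel.induct)
    case tr_zero then show ?case by (rule tensor_rel.tr_zero)
  next
    case (tr_add x y) then show ?case by (simp add: tensor_rel.tr_add)
  next
    case (tr_neg x) then show ?case by (simp add: tensor_rel.tr_neg)
  next
    case (tr_left a b c)
    have "a \<oplus>\<^bsub>Se e\<^esub> b = a \<oplus>\<^bsub>S\<^esub> b" by (simp add: skew_simps class_simps)
    then show ?case using tensor_rel.tr_left[OF K2[OF tr_left(1)] K2[OF tr_left(2)] K2[OF tr_left(3)]]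
      by simp
  next
    case (tr_right a b c)
    have "b \<oplus>\<^bsub>Se e\<^esub> c = b \<oplus>\<^bsub>S\<^esub> c" by (simp add: skew_simps class_simps)
    then show ?case using tensor_rel.tr_right[OF K2[OF tr_right(1)] K2[OF tr_right(2)] K2[OF tr_right(3)]]
      by simp
  next
    case (tr_mid a b r)
    have r: "r \<in> carrier A" using tr_mid(3) Ae_c by blast
    have 1: "a \<otimes>\<^bsub>Se e\<^esub> phie e r = a \<otimes>\<^bsub>S\<^esub> phi r" using K5b[OF phi_c[OF r] tr_mid(1)] P_phi by simp
    have 2: "phie e r \<otimes>\<^bsub>Se e\<^esub> b = phi r \<otimes>\<^bsub>S\<^esub> b" using K5a[OF phi_c[OF r] tr_mid(2)] P_phi by simp
    show ?case unfolding 1 2 by (rule tensor_rel.tr_mid[OF K2[OF tr_mid(1)] K2[OF tr_mid(2)] r])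
  qed
qed

lemma rel_push: "c \<in> tensor_rel A S phi \<Longrightarrow> push (map_prod (P e) (P e)) c \<in> tensor_rel (Ae e) (Se e) (phie e)"
proof (rule tr_push)
  fix a b c assume "a \<in> carrier S" "b \<in> carrier S" "c \<in> carrier S"
  then show "(\<lambda>p. pt (map_prod (P e) (P e) (a \<oplus>\<^bsub>S\<^esub> b, c)) p - pt (map_prod (P e) (P e) (a, c)) p -
          pt (map_prod (P e) (P e) (b, c)) p) \<in> tensor_rel (Ae e) (Se e) (phie e)"
    using tensor_rel.tr_left[OF K1 K1 K1] by (simp add: P_add)
next
  fix a b c assume "a \<in> carrier S" "b \<in> carrier S" "c \<in> carrier S"
  then show "(\<lambda>p. pt (map_prod (P e) (P e) (a, b \<oplus>\<^bsub>S\<^esub> c)) p - pt (map_prod (P e) (P e) (a, b)) p -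
          pt (map_prod (P e) (P e) (a, c)) p) \<in> tensor_rel (Ae e) (Se e) (phie e)"
    using tensor_rel.tr_right[OF K1 K1 K1] by (simp add: P_add)
next
  fix a b r assume a: "a \<in> carrier S" and b: "b \<in> carrier S" and r: "r \<in> carrier A"
  have 1: "P e (a \<otimes>\<^bsub>S\<^esub> phi r) = P e a \<otimes>\<^bsub>Se e\<^esub> phie e (rr e r)"
    using K4[OF a phi_c[OF r]] P_phi rr_phie[OF r] by simp
  have 2: "P e (phi r \<otimes>\<^bsub>S\<^esub> b) = phie e (rr e r) \<otimes>\<^bsub>Se e\<^esub> P e b"
    using K4[OF phi_c[OF r] b] P_phi rr_phie[OF r] by simp
  show "(\<lambda>p. pt (map_prod (P e) (P e) (a \<otimes>\<^bsub>S\<^esub> phi r, b)) p -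
          pt (map_prod (P e) (P e) (a, phi r \<otimes>\<^bsub>S\<^esub> b)) p) \<in> tensor_rel (Ae e) (Se e) (phie e)"
    unfolding map_prod_simp 1 2 by (rule tensor_rel.tr_mid[OF K1[OF a] K1[OF b] rr_c[OF r]])
qed

end


context PA begin

lemma fwd:
  assumes sep: "separable_ext A S phi" and e: "e \<in> Ob"
  shows "separable_ext (Ae e) (Se e) (phie e)"
proof -
  obtain xs where xs: "set xs \<subseteq> carrier S \<times> carrier S"
    and one: "finsum S (\<lambda>i. fst (xs ! i) \<otimes>\<^bsub>S\<^esub> snd (xs ! i)) {..<length xs} = \<one>\<^bsub>S\<^esub>"
    and cm: "\<And>s. s \<in> carrier S \<Longrightarrow> tensor_eq A S phi (map (\<lambda>(a, b). (s \<otimes>\<^bsub>S\<^esub> a, b)) xs)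
                                                (map (\<lambda>(a, b). (a, b \<otimes>\<^bsub>S\<^esub> s)) xs)"
    using sep unfolding separable_ext_def by blast
  define m where "m = map_prod (P e) (P e)"
  define ys where "ys = map m xs"
  define F where "F = (\<lambda>p. fst p \<otimes>\<^bsub>S\<^esub> snd p)"
  define Fe where "Fe = (\<lambda>p. fst p \<otimes>\<^bsub>Se e\<^esub> snd p)"
  have xsc: "\<And>p. p \<in> set xs \<Longrightarrow> fst p \<in> carrier S \<and> snd p \<in> carrier S" using xs by auto
  have ysc: "set ys \<subseteq> carrier (Se e) \<times> carrier (Se e)"
    using xsc K1 unfolding ys_def m_def by auto
  have FeP: "Fe (m p) = P e (F p)" if "p \<in> set xs" for p
    using K4 xsc[OF that] unfolding Fe_def F_def m_def by (simp add: map_prod_def split_beta)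
  have Fc: "F p \<in> carrier S" if "p \<in> set xs" for p
    using mult_closed xsc[OF that] unfolding F_def by simp
  have Fec: "Fe p \<in> carrier (Se e)" if pp: "p \<in> set ys" for p
  proof -
    obtain q where q: "q \<in> set xs" "p = m q" using pp unfolding ys_def set_map by blast
    show ?thesis using FeP[OF q(1)] K1[OF Fc[OF q(1)]] q(2) by simp
  qed
  have "finsum (Se e) (\<lambda>i. fst (ys ! i) \<otimes>\<^bsub>Se e\<^esub> snd (ys ! i)) {..<length ys}
      = finsum (Se e) (\<lambda>i. Fe (ys ! i)) {..<length ys}" unfolding Fe_def ..
  also have "\<dots> = lsum (Se e) Fe ys" by (rule finsum_lsum[OF Se_am Fec])
  also have "\<dots> = lsum (Se e) (\<lambda>p. P e (F p)) xs"
    unfolding ys_def lsum_map by (rule lsum_cong) (rule FeP)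
  also have "\<dots> = P e (lsum S F xs)" by (rule lsum_P[symmetric])
  also have "lsum S F xs = \<one>\<^bsub>S\<^esub>"
  proof -
    have "finsum S (\<lambda>i. F (xs ! i)) {..<length xs} = lsum S F xs" by (rule finsum_lsum[OF S_am Fc])
    then show ?thesis using one unfolding F_def by simp
  qed
  also have "P e \<one>\<^bsub>S\<^esub> = \<one>\<^bsub>Se e\<^esub>" by (rule P_one)
  finally have one': "finsum (Se e) (\<lambda>i. fst (ys ! i) \<otimes>\<^bsub>Se e\<^esub> snd (ys ! i)) {..<length ys} = \<one>\<^bsub>Se e\<^esub>" .
  have cm': "tensor_eq (Ae e) (Se e) (phie e) (map (\<lambda>(a, b). (s \<otimes>\<^bsub>Se e\<^esub> a, b)) ys)
                                                (map (\<lambda>(a, b). (a, b \<otimes>\<^bsub>Se e\<^esub> s)) ys)"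
    if s: "s \<in> carrier (Se e)" for s
  proof -
    have sS: "s \<in> carrier S" using K2[OF s] .
    have "tensor_eq (Ae e) (Se e) (phie e) (map m (map (\<lambda>(a, b). (s \<otimes>\<^bsub>S\<^esub> a, b)) xs))
                                           (map m (map (\<lambda>(a, b). (a, b \<otimes>\<^bsub>S\<^esub> s)) xs))"
      by (rule tensor_eq_push[OF cm[OF sS]]) (unfold m_def, rule rel_push)
    moreover have "map m (map (\<lambda>(a, b). (s \<otimes>\<^bsub>S\<^esub> a, b)) xs) = map (\<lambda>(a, b). (s \<otimes>\<^bsub>Se e\<^esub> a, b)) ys"
      unfolding ys_def map_map
    proof (rule map_cong[OF refl])
      fix p assume p: "p \<in> set xs"
      show "(m \<circ> (\<lambda>(a, b). (s \<otimes>\<^bsub>S\<^esub> a, b))) p = ((\<lambda>(a, b). (s \<otimes>\<^bsub>Se e\<^esub> a, b)) \<circ> m) p"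
        using K4[OF sS] xsc[OF p] K2'[OF s] unfolding m_def by (simp add: split_beta)
    qed
    moreover have "map m (map (\<lambda>(a, b). (a, b \<otimes>\<^bsub>S\<^esub> s)) xs) = map (\<lambda>(a, b). (a, b \<otimes>\<^bsub>Se e\<^esub> s)) ys"
      unfolding ys_def map_map
    proof (rule map_cong[OF refl])
      fix p assume p: "p \<in> set xs"
      show "(m \<circ> (\<lambda>(a, b). (a, b \<otimes>\<^bsub>S\<^esub> s))) p = ((\<lambda>(a, b). (a, b \<otimes>\<^bsub>Se e\<^esub> s)) \<circ> m) p"
        using K4[OF _ sS] xsc[OF p] K2'[OF s] unfolding m_def by (simp add: split_beta)
    qed
    ultimately show ?thesis by simp
  qed
  show ?thesis unfolding separable_ext_def using ysc one' cm' by blast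
qed

end


context PA begin

lemma lsum_zeros: "(\<And>x. x \<in> set xs \<Longrightarrow> F x = \<zero>\<^bsub>A\<^esub>) \<Longrightarrow> lsum A F xs = \<zero>\<^bsub>A\<^esub>"
  by (induction xs) auto

lemma uniq_sum: "distinct L \<Longrightarrow> (\<And>c1 c2. c1 \<in> set L \<Longrightarrow> c2 \<in> set L \<Longrightarrow> Q c1 \<Longrightarrow> Q c2 \<Longrightarrow> c1 = c2) \<Longrightarrow>
  v \<in> carrier A \<Longrightarrow> lsum A (\<lambda>c. if Q c then v else \<zero>\<^bsub>A\<^esub>) L = (if \<exists>c\<in>set L. Q c then v else \<zero>\<^bsub>A\<^esub>)"
proof (induction L)
  case Nil then show ?case by simp
next
  case (Cons a L)
  have IH: "lsum A (\<lambda>c. if Q c then v else \<zero>\<^bsub>A\<^esub>) L = (if \<exists>c\<in>set L. Q c then v else \<zero>\<^bsub>A\<^esub>)"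
    using Cons by auto
  show ?case
  proof (cases "Q a")
    case True
    have "\<not> (\<exists>c\<in>set L. Q c)"
    proof
      assume "\<exists>c\<in>set L. Q c"
      then obtain c where c: "c \<in> set L" "Q c" by blast
      then have "c = a" using Cons.prems(2)[of c a] True by simp
      with Cons.prems(1) c(1) show False by simp
    qed
    then show ?thesis using True IH Cons.prems(3) by simp
  next
    case False
    then show ?thesis using IH Cons.prems(3) by simp
  qed
qed

lemma block_one:
  assumes e: "e \<in> Ob" and xs: "set xs \<subseteq> carrier (Se e) \<times> carrier (Se e)"
    and one: "finsum (Se e) (\<lambda>i. fst (xs ! i) \<otimes>\<^bsub>Se e\<^esub> snd (xs ! i)) {..<length xs} = \<one>\<^bsub>Se e\<^esub>"
  shows "lsum S (\<lambda>p. fst p \<otimes>\<^bsub>S\<^esub> snd p) xs = \<one>\<^bsub>Se e\<^esub>"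
proof -
  have xsc: "\<And>p. p \<in> set xs \<Longrightarrow> fst p \<in> carrier (Se e) \<and> snd p \<in> carrier (Se e)" using xs by auto
  have eqm: "fst p \<otimes>\<^bsub>S\<^esub> snd p = fst p \<otimes>\<^bsub>Se e\<^esub> snd p" if "p \<in> set xs" for p
  proof -
    have a: "fst p \<in> carrier (Se e)" and b: "snd p \<in> carrier (Se e)" using xsc[OF that] by auto
    show ?thesis using K5a[OF K2[OF a] b] K2'[OF a] by simp
  qed
  have Fec: "fst p \<otimes>\<^bsub>Se e\<^esub> snd p \<in> carrier (Se e)" if "p \<in> set xs" for p
  proof -
    have a: "fst p \<in> carrier (Se e)" and b: "snd p \<in> carrier (Se e)" using xsc[OF that] by auto
    have "P e (fst p \<otimes>\<^bsub>S\<^esub> snd p) = fst p \<otimes>\<^bsub>Se e\<^esub> snd p"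
      using K4[OF K2[OF a] K2[OF b]] K2'[OF a] K2'[OF b] by simp
    then show ?thesis using K1[OF mult_closed[OF K2[OF a] K2[OF b]], of e] by simp
  qed
  have "lsum S (\<lambda>p. fst p \<otimes>\<^bsub>S\<^esub> snd p) xs = lsum (Se e) (\<lambda>p. fst p \<otimes>\<^bsub>S\<^esub> snd p) xs" by (rule lsum_S_Se)
  also have "\<dots> = lsum (Se e) (\<lambda>p. fst p \<otimes>\<^bsub>Se e\<^esub> snd p) xs" by (rule lsum_cong) (rule eqm)
  also have "\<dots> = finsum (Se e) (\<lambda>i. fst (xs ! i) \<otimes>\<^bsub>Se e\<^esub> snd (xs ! i)) {..<length xs}"
    by (rule finsum_lsum[OF Se_am Fec, symmetric])
  finally show ?thesis using one by simp
qed

lemma bwd: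
  assumes H: "\<forall>e\<in>Ob. separable_ext (Ae e) (Se e) (phie e)"
  shows "separable_ext A S phi"
proof -
  define Q where "Q e xs \<longleftrightarrow> set xs \<subseteq> carrier (Se e) \<times> carrier (Se e) \<and>
           finsum (Se e) (\<lambda>i. fst (xs ! i) \<otimes>\<^bsub>Se e\<^esub> snd (xs ! i)) {..<length xs} = \<one>\<^bsub>Se e\<^esub> \<and>
           (\<forall>s\<in>carrier (Se e). tensor_eq (Ae e) (Se e) (phie e) (map (\<lambda>(a, b). (s \<otimes>\<^bsub>Se e\<^esub> a, b)) xs)
                                                (map (\<lambda>(a, b). (a, b \<otimes>\<^bsub>Se e\<^esub> s)) xs))" for e xs
  have "\<forall>e\<in>Ob. \<exists>xs. Q e xs"
  proof
    fix e assume "e \<in> Ob"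
    then have "separable_ext (Ae e) (Se e) (phie e)" using H by blast
    then show "\<exists>xs. Q e xs" unfolding Q_def separable_ext_def .
  qed
  from bchoice[OF this] obtain X where X: "\<forall>e\<in>Ob. Q e (X e)" ..
  note XX = X[rule_format, unfolded Q_def]
  note X1 = XX[THEN conjunct1]
  note X2 = XX[THEN conjunct2, THEN conjunct1]
  note X3 = XX[THEN conjunct2, THEN conjunct2, rule_format]
  from finite_distinct_list[OF finite_imageI[OF fin, of C]]
  obtain L where L0: "set L = C ` Ob \<and> distinct L" ..
  have L: "set L = C ` Ob" "distinct L" using L0 by simp_all
  define rep where "rep c = (SOME e. e \<in> Ob \<and> C e = c)" for c
  have rep: "rep c \<in> Ob \<and> C (rep c) = c" if "c \<in> set L" for c
  proof -
    have "c \<in> C ` Ob" using that L(1) by simp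
    then obtain e where "e \<in> Ob" "c = C e" by (rule imageE)
    then have "\<exists>e. e \<in> Ob \<and> C e = c" by blast
    then show ?thesis unfolding rep_def by (rule someI_ex)
  qed
  define Xs where "Xs = concat (map (\<lambda>c. X (rep c)) L)"
  have Xsc: "set Xs \<subseteq> carrier S \<times> carrier S"
  proof
    fix p assume "p \<in> set Xs"
    then obtain c where c: "c \<in> set L" "p \<in> set (X (rep c))" unfolding Xs_def set_concat set_map by blast
    have "set (X (rep c)) \<subseteq> carrier (Se (rep c)) \<times> carrier (Se (rep c))"
      using X1 rep[OF c(1)] by blast
    then have "p \<in> carrier (Se (rep c)) \<times> carrier (Se (rep c))" using c(2) by blast
    then show "p \<in> carrier S \<times> carrier S" using K2 by (auto simp del: skew_simps)
  qed
  define F where "F = (\<lambda>p. fst p \<otimes>\<^bsub>S\<^esub> snd p)"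
  have Fc: "F p \<in> carrier S" if "p \<in> set Xs" for p
    using Xsc that mult_closed unfolding F_def by auto
  have "finsum S (\<lambda>i. fst (Xs ! i) \<otimes>\<^bsub>S\<^esub> snd (Xs ! i)) {..<length Xs} = finsum S (\<lambda>i. F (Xs ! i)) {..<length Xs}"
    unfolding F_def ..
  also have "\<dots> = lsum S F Xs" by (rule finsum_lsum[OF S_am Fc])
  also have "\<dots> = lsum S (lsum S F) (map (\<lambda>c. X (rep c)) L)"
    unfolding Xs_def by (rule lsum_concat[OF S_am]) (use Fc Xs_def in auto)
  also have "\<dots> = lsum S (\<lambda>c. \<one>\<^bsub>Se (rep c)\<^esub>) L"
    unfolding lsum_map
  proof (rule lsum_cong)
    fix c assume c: "c \<in> set L"
    show "lsum S F (X (rep c)) = \<one>\<^bsub>Se (rep c)\<^esub>"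
      unfolding F_def by (rule block_one) (use X1 X2 rep[OF c] in auto)
  qed
  also have "\<dots> = \<one>\<^bsub>S\<^esub>"
  proof
    fix g
    have "lsum S (\<lambda>c. \<one>\<^bsub>Se (rep c)\<^esub>) L g = lsum A (\<lambda>c. \<one>\<^bsub>Se (rep c)\<^esub> g) L" by (rule lsum_pt)
    also have "\<dots> = lsum A (\<lambda>c. if g \<in> c then u g else \<zero>\<^bsub>A\<^esub>) L"
      by (rule lsum_cong) (use rep in \<open>auto simp: skew_simps sub_simps class_simps\<close>)
    also have "\<dots> = \<one>\<^bsub>S\<^esub> g"
    proof (cases "g \<in> Ob")
      case False
      then have "\<And>c. c \<in> set L \<Longrightarrow> g \<notin> c" using L C_sub by auto
      then have "lsum A (\<lambda>c. if g \<in> c then u g else \<zero>\<^bsub>A\<^esub>) L = \<zero>\<^bsub>A\<^esub>" by (intro lsum_zeros) auto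
      then show ?thesis using False by (simp add: skew_simps)
    next
      case True
      have ex: "\<exists>c\<in>set L. g \<in> c" using True L C_self by auto
      have un: "c1 = c2" if "c1 \<in> set L" "c2 \<in> set L" "g \<in> c1" "g \<in> c2" for c1 c2
      proof -
        have "C g = c1" using C_eq[of g "rep c1"] rep[OF that(1)] that(3) by simp
        moreover have "C g = c2" using C_eq[of g "rep c2"] rep[OF that(2)] that(4) by simp
        ultimately show ?thesis by simp
      qed
      show ?thesis using uniq_sum[OF L(2), of "\<lambda>c. g \<in> c", OF un u_c] ex True obj_mor
        by (simp add: skew_simps)
    qed
    finally show "lsum S (\<lambda>c. \<one>\<^bsub>Se (rep c)\<^esub>) L g = \<one>\<^bsub>S\<^esub> g" .
  qed
  finally have one: "finsum S (\<lambda>i. fst (Xs ! i) \<otimes>\<^bsub>S\<^esub> snd (Xs ! i)) {..<length Xs} = \<one>\<^bsub>S\<^esub>" .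
  have cm: "tensor_eq A S phi (map (\<lambda>(a, b). (s \<otimes>\<^bsub>S\<^esub> a, b)) Xs) (map (\<lambda>(a, b). (a, b \<otimes>\<^bsub>S\<^esub> s)) Xs)"
    if s: "s \<in> carrier S" for s
  proof -
    have 1: "map (\<lambda>(a, b). (s \<otimes>\<^bsub>S\<^esub> a, b)) Xs =
      concat (map (\<lambda>c. map (\<lambda>(a, b). (P (rep c) s \<otimes>\<^bsub>Se (rep c)\<^esub> a, b)) (X (rep c))) L)"
      unfolding Xs_def map_concat map_map
    proof (rule arg_cong[where f = concat], rule map_cong[OF refl])
      fix c assume c: "c \<in> set L"
      have Xr: "set (X (rep c)) \<subseteq> carrier (Se (rep c)) \<times> carrier (Se (rep c))" using X1 rep[OF c] by blast
      show "(map (\<lambda>(a, b). (s \<otimes>\<^bsub>S\<^esub> a, b)) \<circ> (\<lambda>c. X (rep c))) c =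
          map (\<lambda>(a, b). (P (rep c) s \<otimes>\<^bsub>Se (rep c)\<^esub> a, b)) (X (rep c))"
        using K5a[OF s] Xr by (auto intro!: map_cong)
    qed
    have 2: "map (\<lambda>(a, b). (a, b \<otimes>\<^bsub>S\<^esub> s)) Xs =
      concat (map (\<lambda>c. map (\<lambda>(a, b). (a, b \<otimes>\<^bsub>Se (rep c)\<^esub> P (rep c) s)) (X (rep c))) L)"
      unfolding Xs_def map_concat map_map
    proof (rule arg_cong[where f = concat], rule map_cong[OF refl])
      fix c assume c: "c \<in> set L"
      have Xr: "set (X (rep c)) \<subseteq> carrier (Se (rep c)) \<times> carrier (Se (rep c))" using X1 rep[OF c] by blast
      show "(map (\<lambda>(a, b). (a, b \<otimes>\<^bsub>S\<^esub> s)) \<circ> (\<lambda>c. X (rep c))) c =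
          map (\<lambda>(a, b). (a, b \<otimes>\<^bsub>Se (rep c)\<^esub> P (rep c) s)) (X (rep c))"
        using K5b[OF s] Xr by (auto intro!: map_cong)
    qed
    show ?thesis unfolding 1 2
    proof (rule tensor_eq_concat)
      fix c assume c: "c \<in> set L"
      have "tensor_eq (Ae (rep c)) (Se (rep c)) (phie (rep c))
         (map (\<lambda>(a, b). (P (rep c) s \<otimes>\<^bsub>Se (rep c)\<^esub> a, b)) (X (rep c)))
         (map (\<lambda>(a, b). (a, b \<otimes>\<^bsub>Se (rep c)\<^esub> P (rep c) s)) (X (rep c)))"
        using X3[OF _ K1[OF s]] rep[OF c] by blast
      then show "tensor_eq A S phi (map (\<lambda>(a, b). (P (rep c) s \<otimes>\<^bsub>Se (rep c)\<^esub> a, b)) (X (rep c)))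
         (map (\<lambda>(a, b). (a, b \<otimes>\<^bsub>Se (rep c)\<^esub> P (rep c) s)) (X (rep c)))"
        by (rule tensor_eq_mono[OF rel_incl])
    qed
  qed
  show ?thesis unfolding separable_ext_def using Xsc one cm by blast
qed

end

theorem proposition3p1:
  fixes G :: "'g gpd" and A :: "('a, 'm) ring_scheme"
    and D :: "'g \<Rightarrow> 'a set" and u :: "'g \<Rightarrow> 'a" and act :: "'g \<Rightarrow> 'a \<Rightarrow> 'a"
  assumes "groupoid G"
    and "finite (gobj G)"
    and "ring A"
    and "unital_partial_action G A D u act"
    and "direct_sum_objs G A D"
  shows "separable_ext A (skew_ring G A D u act) (skew_emb G A u) \<longleftrightarrow>
         (\<forall>e\<in>gobj G. separable_ext (class_ring G A D u e)
                         (skew_ring (sub_gpd G e) (class_ring G A D u e) D u act)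
                         (skew_emb (sub_gpd G e) (class_ring G A D u e) u))"
proof -
  interpret PA G A D u act
    by (intro PA.intro gpdL.intro PA_axioms.intro) (use assms in auto)
  show ?thesis
  proof
    assume h: "separable_ext A (skew_ring G A D u act) (skew_emb G A u)"
    show "\<forall>e\<in>gobj G. separable_ext (class_ring G A D u e)
                         (skew_ring (sub_gpd G e) (class_ring G A D u e) D u act)
                         (skew_emb (sub_gpd G e) (class_ring G A D u e) u)"
      by (intro ballI fwd[OF h])
  next
    assume h: "\<forall>e\<in>gobj G. separable_ext (class_ring G A D u e)
                         (skew_ring (sub_gpd G e) (class_ring G A D u e) D u act)
                         (skew_emb (sub_gpd G e) (class_ring G A D u e) u)"
    show "separable_ext A (skew_ring G A D u act) (skew_emb G A u)" by (rule bwd[OF h])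
  qed
qed

end
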